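(* Let $E$ be a finite-dimensional real vector space ordered by a closed proper cone $C$. Let $U\subset E$ be a nonempty, order-regular, convex, open set. Let $0<T\leq \infty$ and let $f\colon [0,T)\times U\to E$ be a continuous map such that, for every $t\in[0,T)$, the map $f(t,\cdot)\colon U\to E$ is quasi-monotone increasing and convex. Then for every $t\in[0,T)$ the set $\mathcal D_f(t)$ is convex, and the map $x\mapsto \psi_f(t,x)$ is convex on $\mathcal D_f(t)$, i.e. $\psi_f(t,\lambda x+(1-\lambda)y)\leq \lambda\psi_f(t,x)+(1-\lambda)\psi_f(t,y)$ for all $x,y\in\mathcal D_f(t)$ and $\lambda\in[0,1]$.
   Context: A cone in a real vector space $E$ is a set $C$ with $\lambda C\subset C$ for all $\lambda>0$; it is proper if $C+C\subset C$ and $C\cap(-C)=\{0\}$. The partial order induced by $C$ is $x\leq y$ iff $y-x\in C$. $E^*$ is the dual space and $C^*=\{l\in E^*: l(x)\geq 0 \text{ for all } x\in C\}$ is the dual cone. For $D\subset E$, a map $g\colon D\to E$ is quasi-monotone increasing if for all $x,y\in D$ and $l\in C^*$: $x\leq y$ and $l(x)=l(y)$ imply $l(g(x))\leq l(g(y))$. A map $g\colon D\to E$ is convex if $D$ is convex and $g(\lambda x+(1-\lambda)y)\leq\lambda g(x)+(1-\lambda)g(y)$ for all $x,y\in D$, $\lambda\in[0,1]$. A set $D\subset E$ is order-regular if $x\in D$ and $y\leq x$ imply $y\in D$. Under the hypotheses, $f$ is locally Lipschitz in the second variable (uniformly for $t$ in compact subsets of $[0,T)$), so for each $x\in U$ the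 equation $\dot\psi(t)=f(t,\psi(t))$ has a unique maximally extended solution $\psi_f(\cdot,x)$ with $\psi_f(0,x)=x$, defined on $[0,\theta_f(x))$ with $0<\theta_f(x)\leq T$. For $t\geq 0$, $\mathcal D_f(t)=\{x\in U: t<\theta_f(x)\}$. *)

theory Defs
  imports "HOL-Analysis.Analysis"
begin

definition is_cone :: "'a::real_vector set \<Rightarrow> bool" where
  "is_cone C \<longleftrightarrow> (\<forall>c::real. c > 0 \<longrightarrow> (\<forall>x\<in>C. c *\<^sub>R x \<in> C))"

definition proper_cone :: "'a::real_vector set \<Rightarrow> bool" where
  "proper_cone C \<longleftrightarrow> is_cone C \<and> (\<forall>x\<in>C. \<forall>y\<in>C. x + y \<in> C) \<and> C \<inter> uminus ` C = {0}"

definition cone_le :: "'a::real_vector set \<Rightarrow> 'a \<Rightarrow> 'a \<Rightarrow> bool" where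
  "cone_le C x y \<longleftrightarrow> y - x \<in> C"

definition dual_cone :: "'a::real_vector set \<Rightarrow> ('a \<Rightarrow> real) set" where
  "dual_cone C = {l. linear l \<and> (\<forall>x\<in>C. l x \<ge> 0)}"

definition quasi_monotone_inc :: "'a::real_vector set \<Rightarrow> 'a set \<Rightarrow> ('a \<Rightarrow> 'a) \<Rightarrow> bool" where
  "quasi_monotone_inc C D g \<longleftrightarrow>
     (\<forall>x\<in>D. \<forall>y\<in>D. \<forall>l\<in>dual_cone C. cone_le C x y \<and> l x = l y \<longrightarrow> l (g x) \<le> l (g y))"

definition convex_map :: "'a::real_vector set \<Rightarrow> 'a set \<Rightarrow> ('a \<Rightarrow> 'a) \<Rightarrow> bool" where
  "convex_map C D g \<longleftrightarrow> convex D \<and>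
     (\<forall>x\<in>D. \<forall>y\<in>D. \<forall>c::real. 0 \<le> c \<and> c \<le> 1 \<longrightarrow>
        cone_le C (g (c *\<^sub>R x + (1 - c) *\<^sub>R y)) (c *\<^sub>R g x + (1 - c) *\<^sub>R g y))"

definition order_regular :: "'a::real_vector set \<Rightarrow> 'a set \<Rightarrow> bool" where
  "order_regular C D \<longleftrightarrow> (\<forall>x\<in>D. \<forall>y. cone_le C y x \<longrightarrow> y \<in> D)"

definition time_dom :: "ereal \<Rightarrow> real set" where
  "time_dom T = {t. 0 \<le> t \<and> ereal t < T}"

definition ode_sol_on ::
  "ereal \<Rightarrow> 'a::real_normed_vector set \<Rightarrow> (real \<Rightarrow> 'a \<Rightarrow> 'a) \<Rightarrow> 'a \<Rightarrow> real \<Rightarrow> (real \<Rightarrow> 'a) \<Rightarrow> bool" where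
  "ode_sol_on T U f x s \<phi> \<longleftrightarrow> 0 \<le> s \<and> ereal s < T \<and> \<phi> 0 = x \<and>
     (\<forall>\<tau>\<in>{0..s}. \<phi> \<tau> \<in> U \<and> (\<phi> has_vector_derivative f \<tau> (\<phi> \<tau>)) (at \<tau> within {0..s}))"

definition theta_f :: "ereal \<Rightarrow> 'a::real_normed_vector set \<Rightarrow> (real \<Rightarrow> 'a \<Rightarrow> 'a) \<Rightarrow> 'a \<Rightarrow> ereal" where
  "theta_f T U f x = (SUP s\<in>{s. \<exists>\<phi>. ode_sol_on T U f x s \<phi>}. ereal s)"

definition D_f :: "ereal \<Rightarrow> 'a::real_normed_vector set \<Rightarrow> (real \<Rightarrow> 'a \<Rightarrow> 'a) \<Rightarrow> real \<Rightarrow> 'a set" where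
  "D_f T U f t = {x\<in>U. ereal t < theta_f T U f x}"

definition psi_f :: "ereal \<Rightarrow> 'a::real_normed_vector set \<Rightarrow> (real \<Rightarrow> 'a \<Rightarrow> 'a) \<Rightarrow> real \<Rightarrow> 'a \<Rightarrow> 'a" where
  "psi_f T U f t x = (THE y. \<exists>s \<phi>. t \<le> s \<and> ode_sol_on T U f x s \<phi> \<and> \<phi> t = y)"

end

theory Submission
  imports Defs
begin


lemma gronwall_dini:
  fixes h :: "real \<Rightarrow> real"
  assumes cont: "continuous_on {0..\<tau>} h" and K: "0 \<le> K" and P: "0 \<le> P" and eta: "0 < \<eta>"
    and dini: "\<And>\<sigma> \<epsilon>. \<sigma> \<in> {0..<\<tau>} \<Longrightarrow> \<epsilon> > 0 \<Longrightarrow> \<exists>\<delta>>0. \<forall>r. \<sigma> < r \<and> r \<le> \<tau> \<and> r - \<sigma> < \<delta> \<longrightarrow>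
               h r \<le> h \<sigma> + (r - \<sigma>) * (P + K * max (h \<sigma>) 0 + \<epsilon>)"
    and s: "s \<in> {0..\<tau>}"
  shows "h s \<le> (max (h 0) 0 + P + \<eta>) * exp ((K+1) * s)"
proof (rule ccontr)
  assume ne: "\<not> h s \<le> (max (h 0) 0 + P + \<eta>) * exp ((K+1) * s)"
  define G0 where "G0 = max (h 0) 0 + P + \<eta>"
  define g where "g = (\<lambda>\<sigma>. G0 * exp ((K+1) * \<sigma>))"
  have G0: "G0 > 0" "P + \<eta> \<le> G0" "h 0 < G0" using P eta by (auto simp: G0_def)
  have gpos: "g \<sigma> > 0" for \<sigma> using G0 by (simp add: g_def)
  have gge: "\<sigma> \<ge> 0 \<Longrightarrow> G0 \<le> g \<sigma>" for \<sigma> using G0 K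
    by (simp add: g_def)
  define B where "B = {\<sigma>\<in>{0..\<tau>}. h \<sigma> > g \<sigma>}"
  have sB: "s \<in> B" using ne s by (simp add: B_def g_def G0_def)
  define \<sigma>1 where "\<sigma>1 = Inf B"
  have bdd: "bdd_below B" unfolding B_def by (rule bdd_belowI[of _ 0]) auto
  have s1le: "\<sigma>1 \<le> b" if "b \<in> B" for b using cInf_lower[OF that bdd] by (simp add: \<sigma>1_def)
  have s1ge: "0 \<le> \<sigma>1" unfolding \<sigma>1_def using sB by (intro cInf_greatest) (auto simp: B_def)
  have s1tau: "\<sigma>1 \<le> \<tau>" using s1le[OF sB] s by auto
  have below: "h \<sigma> \<le> g \<sigma>" if "\<sigma> \<in> {0..<\<sigma>1}" for \<sigma>
  proof -
    have "\<sigma> \<notin> B" using that s1le by force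
    then show ?thesis using that s1tau by (auto simp: B_def)
  qed
  have hs1: "h \<sigma>1 \<le> g \<sigma>1"
  proof (cases "\<sigma>1 = 0")
    case True then show ?thesis using G0 gge[of 0] by simp
  next
    case False
    then have pos: "\<sigma>1 > 0" using s1ge by simp
    have cl: "closure {0..<\<sigma>1} = {0..\<sigma>1}" using pos by simp
    have c2: "continuous_on (closure {0..<\<sigma>1}) (\<lambda>\<sigma>. h \<sigma> - g \<sigma>)"
      unfolding cl g_def
      by (intro continuous_intros continuous_on_subset[OF cont]) (use s1tau in auto)
    have "(\<lambda>\<sigma>. h \<sigma> - g \<sigma>) ` (closure {0..<\<sigma>1}) \<subseteq> {..0}"
      by (rule image_closure_subset[OF c2]) (use below in auto)
    then have "h \<sigma>1 - g \<sigma>1 \<in> {..0}" using pos cl by (metis atLeastAtMost_iff image_subset_iff order_refl s1ge)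
    then show ?thesis by simp
  qed
  have s1notB: "\<sigma>1 \<notin> B" using hs1 by (auto simp: B_def)
  have s1lt: "\<sigma>1 < \<tau>"
  proof (rule ccontr)
    assume "\<not> \<sigma>1 < \<tau>"
    then have "\<sigma>1 = \<tau>" using s1tau by simp
    then have "s = \<sigma>1" using s s1le[OF sB] by auto
    then show False using sB s1notB by simp
  qed
  obtain \<delta> where d: "\<delta> > 0" and dd: "\<And>r. \<sigma>1 < r \<Longrightarrow> r \<le> \<tau> \<Longrightarrow> r - \<sigma>1 < \<delta> \<Longrightarrow>
      h r \<le> h \<sigma>1 + (r - \<sigma>1) * (P + K * max (h \<sigma>1) 0 + \<eta>)"
    using dini[of \<sigma>1 \<eta>] s1ge s1lt eta by auto
  have "\<exists>b\<in>B. b < \<sigma>1 + \<delta>"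
    using cInf_less_iff[of B "\<sigma>1 + \<delta>"] sB bdd d by (auto simp: \<sigma>1_def)
  then obtain b where bB: "b \<in> B" and bl: "b < \<sigma>1 + \<delta>" by auto
  have bgt: "\<sigma>1 < b" using s1le[OF bB] s1notB bB by (cases "b = \<sigma>1") auto
  have btau: "b \<le> \<tau>" using bB by (auto simp: B_def)
  have "h b \<le> h \<sigma>1 + (b - \<sigma>1) * (P + K * max (h \<sigma>1) 0 + \<eta>)"
    using dd[OF bgt btau] bl by simp
  also have "\<dots> \<le> g \<sigma>1 + (b - \<sigma>1) * (P + K * g \<sigma>1 + \<eta>)"
  proof -
    have "max (h \<sigma>1) 0 \<le> g \<sigma>1" using hs1 gpos[of \<sigma>1] by simp
    then have "K * max (h \<sigma>1) 0 \<le> K * g \<sigma>1" using K by (rule mult_left_mono)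
    then have "(b - \<sigma>1) * (P + K * max (h \<sigma>1) 0 + \<eta>) \<le> (b - \<sigma>1) * (P + K * g \<sigma>1 + \<eta>)"
      using bgt by (intro mult_left_mono) auto
    then show ?thesis using hs1 by linarith
  qed
  also have "\<dots> \<le> g \<sigma>1 + (b - \<sigma>1) * ((K + 1) * g \<sigma>1)"
    using gge[OF s1ge] G0 bgt by (intro add_left_mono mult_left_mono) (auto simp: algebra_simps)
  also have "\<dots> = g \<sigma>1 * (1 + (K+1) * (b - \<sigma>1))" by (simp add: algebra_simps)
  also have "\<dots> \<le> g \<sigma>1 * exp ((K+1) * (b - \<sigma>1))"
    using gpos[of \<sigma>1] exp_ge_add_one_self[of "(K+1) * (b - \<sigma>1)"] by (intro mult_left_mono) auto
  also have "\<dots> = g b" by (simp add: g_def mult.assoc exp_add[symmetric] algebra_simps)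
  finally show False using bB by (auto simp: B_def)
qed




lemma integral_pow_real:
  assumes "0 \<le> (\<sigma>::real)"
  shows "integral {0..\<sigma>} (\<lambda>r. r^k) = \<sigma>^(Suc k) / Suc k"
proof -
  have "((\<lambda>r. r^k) has_integral ((\<lambda>r. r^Suc k / Suc k) \<sigma> - (\<lambda>r. r^Suc k / Suc k) 0)) {0..\<sigma>}"
  proof (rule fundamental_theorem_of_calculus[OF assms])
    fix x :: real assume "x \<in> {0..\<sigma>}"
    have "((\<lambda>r. r^Suc k / Suc k) has_real_derivative (real (Suc k) * x^k / Suc k)) (at x within {0..\<sigma>})"
      by (intro derivative_eq_intros) auto
    then show "((\<lambda>r. r^Suc k / Suc k) has_vector_derivative x^k) (at x within {0..\<sigma>})"
      by (simp add: has_real_derivative_iff_has_vector_derivative del: of_nat_Suc)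
  qed
  then show ?thesis by (simp add: integral_unique)
qed

lemma picard_global:
  fixes F :: "real \<Rightarrow> 'a::euclidean_space \<Rightarrow> 'a" and z :: 'a
  assumes s0: "0 \<le> s0" and L: "0 \<le> L"
    and cont: "\<And>u. continuous_on {0..s0} u \<Longrightarrow> continuous_on {0..s0} (\<lambda>r. F r (u r))"
    and lip: "\<And>\<sigma> v w. \<sigma> \<in> {0..s0} \<Longrightarrow> norm (F \<sigma> v - F \<sigma> w) \<le> L * norm (v - w)"
    and bnd: "\<And>\<sigma> v. \<sigma> \<in> {0..s0} \<Longrightarrow> norm (F \<sigma> v) \<le> M"
  shows "\<exists>u. u 0 = z \<and> continuous_on {0..s0} u \<and>
     (\<forall>\<sigma>\<in>{0..s0}. (u has_vector_derivative F \<sigma> (u \<sigma>)) (at \<sigma> within {0..s0}))"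
proof -
  have M: "0 \<le> M" using bnd[of 0 z] s0 by (auto intro: order_trans[OF norm_ge_zero])
  have intcont: "continuous_on {0..s0} (\<lambda>\<sigma>. integral {0..\<sigma>} g)" if "continuous_on {0..s0} g" for g :: "real \<Rightarrow> 'a"
    by (rule continuous_on_vector_derivative) (rule integral_has_vector_derivative[OF that], simp)
  define pic where "pic = rec_nat (\<lambda>\<sigma>::real. z) (\<lambda>n p \<sigma>. z + integral {0..\<sigma>} (\<lambda>r. F r (p r)))"
  have pic0: "pic 0 = (\<lambda>\<sigma>. z)" and picS: "\<And>n. pic (Suc n) = (\<lambda>\<sigma>. z + integral {0..\<sigma>} (\<lambda>r. F r (pic n r)))"
    by (simp_all add: pic_def)
  have pc: "continuous_on {0..s0} (pic n)" for n
  proof (induction n)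
    case 0 then show ?case by (simp add: pic0)
  next
    case (Suc n) then show ?case
      unfolding picS by (intro continuous_intros intcont cont)
  qed
  have integ: "(\<lambda>r. F r (pic n r)) integrable_on {0..\<sigma>}" if "\<sigma> \<in> {0..s0}" for n \<sigma>
    by (rule integrable_continuous_real, rule continuous_on_subset[OF cont[OF pc]]) (use that in auto)
  have bound: "norm (pic (Suc n) \<sigma> - pic n \<sigma>) \<le> M * L^n * \<sigma>^(Suc n) / fact (Suc n)" if "\<sigma> \<in> {0..s0}" for n \<sigma>
    using that
  proof (induction n arbitrary: \<sigma>)
    case 0
    have "norm (integral {0..\<sigma>} (\<lambda>r. F r z)) \<le> integral {0..\<sigma>} (\<lambda>r. M)"
      by (rule integral_norm_bound_integral) (use integ[OF 0, of 0] 0 in \<open>auto simp: pic0 intro: bnd\<close>)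
    then show ?case using 0 by (simp add: pic0 picS mult.commute)
  next
    case (Suc n)
    have e: "pic (Suc (Suc n)) \<sigma> - pic (Suc n) \<sigma> = integral {0..\<sigma>} (\<lambda>r. F r (pic (Suc n) r)) - integral {0..\<sigma>} (\<lambda>r. F r (pic n r))"
      by (simp only: picS) simp
    also have "\<dots> = integral {0..\<sigma>} (\<lambda>r. F r (pic (Suc n) r) - F r (pic n r))"
      by (rule integral_diff[symmetric]) (use integ Suc.prems in auto)
    finally have e: "pic (Suc (Suc n)) \<sigma> - pic (Suc n) \<sigma> = integral {0..\<sigma>} (\<lambda>r. F r (pic (Suc n) r) - F r (pic n r))" .
    have "norm (integral {0..\<sigma>} (\<lambda>r. F r (pic (Suc n) r) - F r (pic n r)))
        \<le> integral {0..\<sigma>} (\<lambda>r. (L * (M * L^n / fact (Suc n))) * r^(Suc n))"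
    proof (rule integral_norm_bound_integral)
      show "(\<lambda>r. F r (pic (Suc n) r) - F r (pic n r)) integrable_on {0..\<sigma>}"
        using integ Suc.prems by (intro integrable_diff) auto
      show "(\<lambda>r. (L * (M * L^n / fact (Suc n))) * r^(Suc n)) integrable_on {0..\<sigma>}"
        by (intro integrable_continuous_real continuous_intros)
      fix r assume r: "r \<in> {0..\<sigma>}"
      then have r': "r \<in> {0..s0}" using Suc.prems by auto
      have "norm (F r (pic (Suc n) r) - F r (pic n r)) \<le> L * norm (pic (Suc n) r - pic n r)"
        by (rule lip[OF r'])
      also have "\<dots> \<le> L * (M * L^n * r^(Suc n) / fact (Suc n))"
        by (rule mult_left_mono[OF Suc.IH[OF r'] L])
      finally show "norm (F r (pic (Suc n) r) - F r (pic n r)) \<le> (L * (M * L^n / fact (Suc n))) * r^(Suc n)"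
        by (simp add: field_simps)
    qed
    also have "\<dots> = (L * (M * L^n / fact (Suc n))) * (\<sigma>^(Suc (Suc n)) / Suc (Suc n))"
      using Suc.prems by (simp add: integral_pow_real del: of_nat_Suc power_Suc)
    also have "\<dots> = M * L^Suc n * \<sigma>^(Suc (Suc n)) / fact (Suc (Suc n))"
      by (simp add: field_simps del: of_nat_Suc power_Suc) (simp add: algebra_simps)
    finally show ?case using e by simp
  qed
  define d where "d = (\<lambda>i \<sigma>. pic (Suc i) \<sigma> - pic i \<sigma>)"
  define Mi where "Mi = (\<lambda>i. M * L^i * s0^(Suc i) / fact (Suc i))"
  have dM: "norm (d i \<sigma>) \<le> Mi i" if "\<sigma> \<in> {0..s0}" for i \<sigma>
  proof -
    have "M * L^i * \<sigma>^(Suc i) / fact (Suc i) \<le> M * L^i * s0^(Suc i) / fact (Suc i)"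
      using that M L by (intro divide_right_mono mult_left_mono power_mono) auto
    then show ?thesis using bound[OF that, of i] by (simp add: d_def Mi_def)
  qed
  have sM: "summable Mi"
  proof (rule summable_comparison_test)
    show "summable (\<lambda>i. (M * s0) * (inverse (fact i) * (L * s0)^i))"
      by (intro summable_mult summable_exp)
    show "\<exists>N. \<forall>n\<ge>N. norm (Mi n) \<le> (M * s0) * (inverse (fact n) * (L * s0)^n)"
    proof (intro exI allI impI)
      fix n :: nat
      have f: "fact n \<le> (fact (Suc n) :: real)" by (rule fact_mono) auto
      have pos: "0 < (fact n :: real)" by simp
      have "Mi n = (M * s0) * ((L * s0)^n / fact (Suc n))"
        by (simp add: Mi_def power_mult_distrib field_simps del: fact_Suc)
      also have "\<dots> \<le> (M * s0) * ((L * s0)^n / fact n)"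
        using M s0 L f pos by (intro mult_left_mono divide_left_mono) auto
      finally have "Mi n \<le> (M * s0) * (inverse (fact n) * (L * s0)^n)" by (simp add: field_simps)
      moreover have "0 \<le> Mi n" using M L s0 by (simp add: Mi_def)
      ultimately show "norm (Mi n) \<le> (M * s0) * (inverse (fact n) * (L * s0)^n)" by simp
    qed
  qed
  define u where "u = (\<lambda>\<sigma>. z + (\<Sum>i. d i \<sigma>))"
  have picsum: "pic n = (\<lambda>\<sigma>. z + (\<Sum>i<n. d i \<sigma>))" for n
  proof
    fix \<sigma>
    have "(\<Sum>i<n. d i \<sigma>) = pic n \<sigma> - pic 0 \<sigma>"
      unfolding d_def by (rule sum_lessThan_telescope)
    then show "pic n \<sigma> = z + (\<Sum>i<n. d i \<sigma>)" by (simp add: pic0)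
  qed
  have ul0: "uniform_limit {0..s0} (\<lambda>n \<sigma>. \<Sum>i<n. d i \<sigma>) (\<lambda>\<sigma>. \<Sum>i. d i \<sigma>) sequentially"
    by (rule Weierstrass_m_test[OF dM sM])
  have ul: "uniform_limit {0..s0} pic u sequentially"
    unfolding picsum u_def by (intro uniform_limit_intros ul0)
  have uc: "continuous_on {0..s0} u"
    by (rule uniform_limit_theorem[OF _ ul]) (auto simp: pc)
  have eq: "u \<sigma> = z + integral {0..\<sigma>} (\<lambda>r. F r (u r))" if \<sigma>: "\<sigma> \<in> {0..s0}" for \<sigma>
  proof -
    have sub: "{0..\<sigma>} \<subseteq> {0..s0}" using \<sigma> by auto
    have ulF: "uniform_limit {0..\<sigma>} (\<lambda>n r. F r (pic n r)) (\<lambda>r. F r (u r)) sequentially"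
    proof (rule uniform_limitI)
      fix e :: real assume e: "e > 0"
      have "\<forall>\<^sub>F n in sequentially. \<forall>r\<in>{0..s0}. dist (pic n r) (u r) < e / (L + 1)"
        using uniform_limitD[OF ul] e L by simp
      then show "\<forall>\<^sub>F n in sequentially. \<forall>r\<in>{0..\<sigma>}. dist (F r (pic n r)) (F r (u r)) < e"
      proof eventually_elim
        case (elim n)
        show ?case
        proof
          fix r assume r: "r \<in> {0..\<sigma>}"
          then have r': "r \<in> {0..s0}" using sub by auto
          have "dist (F r (pic n r)) (F r (u r)) \<le> L * dist (pic n r) (u r)"
            using lip[OF r'] by (simp add: dist_norm)
          also have "\<dots> \<le> L * (e / (L + 1))"
            using elim r' L by (intro mult_left_mono) (auto intro: less_imp_le)
          also have "\<dots> < e" using L e by (simp add: field_simps)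
          finally show "dist (F r (pic n r)) (F r (u r)) < e" .
        qed
      qed
    qed
    obtain I J where I: "\<And>n. ((\<lambda>r. F r (pic n r)) has_integral I n) {0..\<sigma>}"
      and J: "((\<lambda>r. F r (u r)) has_integral J) {0..\<sigma>}" and IJ: "I \<longlonglongrightarrow> J"
      by (rule uniform_limit_integral[OF ulF]) (auto intro: continuous_on_subset[OF cont[OF pc] sub])
    have "(\<lambda>n. pic (Suc n) \<sigma>) \<longlonglongrightarrow> z + J"
    proof -
      have Ieq: "integral {0..\<sigma>} (\<lambda>r. F r (pic n r)) = I n" for n using I[of n] by (rule integral_unique)
      have "(\<lambda>n. pic (Suc n) \<sigma>) = (\<lambda>n. z + I n)" by (simp add: picS Ieq)
      then show ?thesis using tendsto_add[OF tendsto_const IJ, of z] by simp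
    qed
    moreover have "(\<lambda>n. pic (Suc n) \<sigma>) \<longlonglongrightarrow> u \<sigma>"
      using tendsto_uniform_limitI[OF ul \<sigma>] by (rule LIMSEQ_Suc)
    ultimately have "u \<sigma> = z + J" using LIMSEQ_unique by blast
    then show ?thesis using J by (simp add: integral_unique)
  qed
  show ?thesis
  proof (intro exI conjI ballI)
    show "u 0 = z" using eq[of 0] s0 by (simp del: eq)
    show "continuous_on {0..s0} u" by (rule uc)
    fix \<sigma> assume \<sigma>: "\<sigma> \<in> {0..s0}"
    have "((\<lambda>\<sigma>. z + integral {0..\<sigma>} (\<lambda>r. F r (u r))) has_vector_derivative (0 + F \<sigma> (u \<sigma>))) (at \<sigma> within {0..s0})"
      by (intro derivative_intros integral_has_vector_derivative cont uc \<sigma>)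
    then show "(u has_vector_derivative F \<sigma> (u \<sigma>)) (at \<sigma> within {0..s0})"
      using has_vector_derivative_transform[OF \<sigma>, of u "\<lambda>\<sigma>. z + integral {0..\<sigma>} (\<lambda>r. F r (u r))" "F \<sigma> (u \<sigma>)"] eq by simp
  qed
qed




section \<open>Cone basics\<close>

lemma pc_zero: "proper_cone C \<Longrightarrow> 0 \<in> C"
  unfolding proper_cone_def by auto

lemma pc_add: "proper_cone C \<Longrightarrow> x \<in> C \<Longrightarrow> y \<in> C \<Longrightarrow> x + y \<in> C"
  unfolding proper_cone_def by auto

lemma pc_scale: "proper_cone C \<Longrightarrow> 0 \<le> c \<Longrightarrow> x \<in> C \<Longrightarrow> c *\<^sub>R x \<in> C"
  unfolding proper_cone_def is_cone_def
  by (cases "c = 0") auto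

lemma pc_pointed: "proper_cone C \<Longrightarrow> x \<in> C \<Longrightarrow> - x \<in> C \<Longrightarrow> x = 0"
proof -
  assume p: "proper_cone C" and x: "x \<in> C" and mx: "- x \<in> C"
  have "x \<in> uminus ` C" using mx by (metis image_eqI minus_minus)
  then have "x \<in> C \<inter> uminus ` C" using x by blast
  then show "x = 0" using p unfolding proper_cone_def by auto
qed

lemma pc_convex: "proper_cone C \<Longrightarrow> convex C"
  unfolding convex_def by (auto intro: pc_add pc_scale)

lemma cone_le_refl: "proper_cone C \<Longrightarrow> cone_le C x x"
  by (simp add: cone_le_def pc_zero)

lemma cone_le_trans: "proper_cone C \<Longrightarrow> cone_le C x y \<Longrightarrow> cone_le C y z \<Longrightarrow> cone_le C x z"
  unfolding cone_le_def using pc_add[of C "y - x" "z - y"] by (simp add: algebra_simps)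

lemma cone_le_antisym: "proper_cone C \<Longrightarrow> cone_le C x y \<Longrightarrow> cone_le C y x \<Longrightarrow> x = y"
  unfolding cone_le_def using pc_pointed[of C "y - x"] by (simp add: algebra_simps)

lemma dual_cone_mono: "l \<in> dual_cone C \<Longrightarrow> cone_le C x y \<Longrightarrow> l x \<le> l y"
  unfolding dual_cone_def cone_le_def by (auto simp: linear_diff)

lemma inner_dual_cone: "(\<And>c. c \<in> C \<Longrightarrow> 0 \<le> inner a c) \<Longrightarrow> (\<lambda>v. inner a v) \<in> dual_cone C"
  unfolding dual_cone_def by (auto intro: bounded_linear.linear bounded_linear_inner_right)

section \<open>An interior point of the dual cone\<close>

lemma pc_hull_nonzero:
  assumes p: "proper_cone C" and "finite F"
  shows "F \<subseteq> C \<inter> sphere 0 1 \<Longrightarrow> x \<in> convex hull F \<Longrightarrow> x \<in> C \<and> x \<noteq> 0"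
  using \<open>finite F\<close>
proof (induction F arbitrary: x rule: finite_induct)
  case empty then show ?case by simp
next
  case (insert a F)
  have aC: "a \<in> C" and an: "a \<noteq> 0" using insert.prems by auto
  show ?case
  proof (cases "F = {}")
    case True then show ?thesis using insert.prems aC an by simp
  next
    case False
    obtain u v b where uv: "u \<ge> 0" "v \<ge> 0" "u + v = 1" and b: "b \<in> convex hull F" and x: "x = u *\<^sub>R a + v *\<^sub>R b"
      using insert.prems(2) convex_hull_insert[OF False] by auto
    have bC: "b \<in> C" and bn: "b \<noteq> 0" using insert.IH[OF _ b] insert.prems by auto
    have ua: "u *\<^sub>R a \<in> C" and vb: "v *\<^sub>R b \<in> C" using uv aC bC pc_scale[OF p] by auto
    have xC: "x \<in> C" using x pc_add[OF p ua vb] by simp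
    moreover have "x \<noteq> 0"
    proof
      assume x0: "x = 0"
      then have "- (u *\<^sub>R a) = v *\<^sub>R b" using x by (metis add.commute add_eq_0_iff)
      then have "u *\<^sub>R a = 0" using pc_pointed[OF p ua] vb by simp
      then have "u = 0" using an by simp
      then have "x = b" using x uv by simp
      then show False using bn x0 by simp
    qed
    ultimately show ?thesis by simp
  qed
qed

lemma pc_dual_interior:
  fixes C :: "'a::euclidean_space set"
  assumes cl: "closed C" and p: "proper_cone C"
  shows "\<exists>a \<beta>. \<beta> > 0 \<and> (\<forall>c\<in>C. \<beta> * norm c \<le> inner a c)"
proof -
  define S where "S = C \<inter> sphere 0 1"
  have cS: "compact S" unfolding S_def by (intro closed_Int_compact cl compact_sphere)
  have cK: "compact (convex hull S)" by (rule compact_convex_hull[OF cS])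
  have "0 \<notin> convex hull S"
  proof
    assume "0 \<in> convex hull S"
    then obtain F where "finite F" "F \<subseteq> S" "0 \<in> convex hull F"
      using caratheodory[of S] by auto
    then show False using pc_hull_nonzero[OF p] by (auto simp: S_def)
  qed
  then obtain a b where ab: "inner a 0 < b" "\<forall>x\<in>convex hull S. inner a x > b"
    using separating_hyperplane_closed_point[OF convex_convex_hull compact_imp_closed[OF cK]] by blast
  have b: "b > 0" using ab by simp
  have "\<forall>c\<in>C. b * norm c \<le> inner a c"
  proof
    fix c assume c: "c \<in> C"
    show "b * norm c \<le> inner a c"
    proof (cases "c = 0")
      case True then show ?thesis by simp
    next
      case False
      have "(1 / norm c) *\<^sub>R c \<in> S" using c False pc_scale[OF p, of "1/norm c" c] by (simp add: S_def)
      then have "(1 / norm c) *\<^sub>R c \<in> convex hull S" by (rule subsetD[OF hull_subset])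
      then have "inner a ((1 / norm c) *\<^sub>R c) > b" using ab(2) by blast
      then show ?thesis using False by (simp add: field_simps)
    qed
  qed
  then show ?thesis using b by blast
qed

section \<open>Lipschitz bound for bounded convex functions\<close>

lemma convex_lip_bound:
  fixes g :: "'a::real_normed_vector \<Rightarrow> real"
  assumes r: "r > 0"
    and conv: "\<And>x y c. x \<in> cball x0 (2*r) \<Longrightarrow> y \<in> cball x0 (2*r) \<Longrightarrow> 0 \<le> c \<Longrightarrow> c \<le> 1 \<Longrightarrow>
                 g (c *\<^sub>R x + (1-c) *\<^sub>R y) \<le> c * g x + (1-c) * g y"
    and bnd: "\<And>v. v \<in> cball x0 (2*r) \<Longrightarrow> \<bar>g v\<bar> \<le> M"
    and a: "a \<in> cball x0 r" and b: "b \<in> cball x0 r"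
  shows "g b - g a \<le> (2*M/r) * norm (b - a)"
proof (cases "a = b")
  case True
  have "0 \<le> M" using bnd[of a] a r by (auto intro: order_trans[OF abs_ge_zero])
  then show ?thesis using True r by simp
next
  case False
  define D where "D = norm (b - a)"
  have D: "D > 0" using False by (simp add: D_def)
  define q where "q = b + (r / D) *\<^sub>R (b - a)"
  define c where "c = D / (D + r)"
  have c: "0 \<le> c" "c \<le> 1" using D r by (auto simp: c_def)
  have a2: "a \<in> cball x0 (2*r)" and b2: "b \<in> cball x0 (2*r)" using a b r by auto
  have "dist x0 q = norm ((x0 - b) - (r / D) *\<^sub>R (b - a))" by (simp add: q_def dist_norm algebra_simps)
  also have "\<dots> \<le> norm (x0 - b) + norm ((r / D) *\<^sub>R (b - a))" by (rule norm_triangle_ineq4)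
  finally have "dist x0 q \<le> dist x0 b + norm ((r / D) *\<^sub>R (b - a))" by (simp add: dist_norm)
  also have "norm ((r / D) *\<^sub>R (b - a)) = r" using D r by (simp add: D_def)
  finally have q2: "q \<in> cball x0 (2*r)" using b by simp
  have "c *\<^sub>R q + (1 - c) *\<^sub>R a = b"
  proof -
    have "c *\<^sub>R q + (1 - c) *\<^sub>R a = c *\<^sub>R b + (c * (r / D)) *\<^sub>R (b - a) + (1 - c) *\<^sub>R a"
      by (simp add: q_def scaleR_add_right)
    also have "c * (r / D) = 1 - c" using D r by (simp add: c_def field_simps)
    finally show ?thesis by (simp add: algebra_simps)
  qed
  then have "g b \<le> c * g q + (1 - c) * g a" using conv[OF q2 a2 c] by simp
  then have "g b - g a \<le> c * (g q - g a)" by (simp add: algebra_simps)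
  also have "\<dots> \<le> c * (2 * M)" using bnd[OF q2] bnd[OF a2] c by (intro mult_left_mono) auto
  also have "\<dots> \<le> (D / r) * (2 * M)"
  proof (rule mult_right_mono)
    show "c \<le> D / r" using D r by (simp add: c_def field_simps)
    show "0 \<le> 2 * M" using bnd[OF a2] by (auto intro: order_trans[OF abs_ge_zero])
  qed
  finally show ?thesis by (simp add: D_def field_simps)
qed




locale ode_setting =
  fixes C :: "'a::euclidean_space set" and U :: "'a set"
    and T :: ereal and f :: "real \<Rightarrow> 'a \<Rightarrow> 'a"
  assumes closedC: "closed C" and proper: "proper_cone C"
    and Une: "U \<noteq> {}" and oreg: "order_regular C U" and convU: "convex U" and openU: "open U"
    and T0: "0 < T"
    and contf: "continuous_on (time_dom T \<times> U) (\<lambda>(t, x). f t x)"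
    and qm: "\<And>t. t \<in> time_dom T \<Longrightarrow> quasi_monotone_inc C U (f t)"
    and cm: "\<And>t. t \<in> time_dom T \<Longrightarrow> convex_map C U (f t)"
begin

lemma tdom: "0 \<le> \<tau>0 \<Longrightarrow> ereal \<tau>0 < T \<Longrightarrow> {0..\<tau>0} \<subseteq> time_dom T"
  unfolding time_dom_def by (auto intro: le_less_trans[of _ "ereal \<tau>0"])

lemma l_convex:
  assumes l: "l \<in> dual_cone C" and x: "x \<in> U" and y: "y \<in> U" and c: "0 \<le> c" "c \<le> 1"
    and \<sigma>: "\<sigma> \<in> time_dom T"
  shows "l (f \<sigma> (c *\<^sub>R x + (1 - c) *\<^sub>R y)) \<le> c * l (f \<sigma> x) + (1 - c) * l (f \<sigma> y)"
proof -
  have "cone_le C (f \<sigma> (c *\<^sub>R x + (1 - c) *\<^sub>R y)) (c *\<^sub>R f \<sigma> x + (1 - c) *\<^sub>R f \<sigma> y)"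
    using cm[OF \<sigma>] x y c unfolding convex_map_def by blast
  then have "l (f \<sigma> (c *\<^sub>R x + (1 - c) *\<^sub>R y)) \<le> l (c *\<^sub>R f \<sigma> x + (1 - c) *\<^sub>R f \<sigma> y)"
    by (rule dual_cone_mono[OF l])
  also have "\<dots> = c * l (f \<sigma> x) + (1 - c) * l (f \<sigma> y)"
    using l unfolding dual_cone_def by (simp add: linear_add linear_scale)
  finally show ?thesis .
qed

lemma f_bound:
  assumes Q: "compact Q" "Q \<subseteq> U" and \<tau>0: "0 \<le> \<tau>0" "ereal \<tau>0 < T"
  shows "\<exists>M. \<forall>\<sigma>\<in>{0..\<tau>0}. \<forall>v\<in>Q. norm (f \<sigma> v) \<le> M"
proof -
  have sub: "{0..\<tau>0} \<times> Q \<subseteq> time_dom T \<times> U" using tdom[OF \<tau>0] Q by auto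
  have "compact ((\<lambda>(t, x). f t x) ` ({0..\<tau>0} \<times> Q))"
    by (intro compact_continuous_image continuous_on_subset[OF contf sub] compact_Times Q compact_Icc)
  then obtain M where "\<forall>y\<in>(\<lambda>(t, x). f t x) ` ({0..\<tau>0} \<times> Q). norm y \<le> M"
    using compact_imp_bounded bounded_iff by metis
  then show ?thesis by auto
qed

lemma local_lip:
  assumes \<tau>0: "0 \<le> \<tau>0" "ereal \<tau>0 < T"
  shows "local_lipschitz {0..\<tau>0} U f"
proof (rule local_lipschitzI)
  fix t0 x0 assume t0: "t0 \<in> {0..\<tau>0}" and x0: "x0 \<in> U"
  obtain e where e: "e > 0" "cball x0 e \<subseteq> U" using openU x0 open_contains_cball by blast
  define r where "r = e / 2"
  have r: "r > 0" and rU: "cball x0 (2*r) \<subseteq> U" using e by (auto simp: r_def)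
  obtain Mf where Mf: "\<And>\<sigma> v. \<sigma>\<in>{0..\<tau>0} \<Longrightarrow> v\<in>cball x0 (2*r) \<Longrightarrow> norm (f \<sigma> v) \<le> Mf"
    using f_bound[OF compact_cball rU \<tau>0] by blast
  obtain a \<beta> where \<beta>: "\<beta> > 0" and a: "\<And>c. c \<in> C \<Longrightarrow> \<beta> * norm c \<le> inner a c"
    using pc_dual_interior[OF closedC proper] by blast
  define Mw where "Mw = (norm a + \<beta>) * Mf"
  define L where "L = real DIM('a) * (4 * Mw / (r * \<beta>))"
  have Mf0: "0 \<le> Mf" using Mf[of 0 x0] \<tau>0 r by (auto intro: order_trans[OF norm_ge_zero])
  have keyl: "\<bar>inner w (f \<sigma> q) - inner w (f \<sigma> p)\<bar> \<le> (2 * Mw / r) * norm (q - p)"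
    if \<sigma>: "\<sigma> \<in> {0..\<tau>0}" and w: "norm w \<le> norm a + \<beta>" "(\<lambda>v. inner w v) \<in> dual_cone C"
      and p: "p \<in> cball x0 r" and q: "q \<in> cball x0 r" for \<sigma> w p q
  proof -
    have \<sigma>T: "\<sigma> \<in> time_dom T" using tdom[OF \<tau>0] \<sigma> by auto
    have conv: "inner w (f \<sigma> (c *\<^sub>R x + (1-c) *\<^sub>R y)) \<le> c * inner w (f \<sigma> x) + (1-c) * inner w (f \<sigma> y)"
      if "x \<in> cball x0 (2*r)" "y \<in> cball x0 (2*r)" "0 \<le> c" "c \<le> 1" for x y c
    proof -
      have "x \<in> U" "y \<in> U" using that(1,2) rU by auto
      then show ?thesis using l_convex[OF w(2), of x y c \<sigma>] that \<sigma>T by auto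
    qed
    have bnd: "\<bar>inner w (f \<sigma> v)\<bar> \<le> Mw" if "v \<in> cball x0 (2*r)" for v
    proof -
      have "\<bar>inner w (f \<sigma> v)\<bar> \<le> norm w * norm (f \<sigma> v)" by (rule Cauchy_Schwarz_ineq2)
      also have "\<dots> \<le> (norm a + \<beta>) * Mf" using w Mf[OF \<sigma> that] \<beta> by (intro mult_mono) auto
      finally show ?thesis by (simp add: Mw_def)
    qed
    have "inner w (f \<sigma> q) - inner w (f \<sigma> p) \<le> (2 * Mw / r) * norm (q - p)"
      by (rule convex_lip_bound[OF r conv bnd p q])
    moreover have "inner w (f \<sigma> p) - inner w (f \<sigma> q) \<le> (2 * Mw / r) * norm (p - q)"
      by (rule convex_lip_bound[OF r conv bnd q p])
    ultimately show ?thesis by (simp add: norm_minus_commute)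
  qed
  have adual: "(\<lambda>v. inner a v) \<in> dual_cone C"
  proof (rule inner_dual_cone)
    fix c assume "c \<in> C"
    then have "\<beta> * norm c \<le> inner a c" by (rule a)
    moreover have "0 \<le> \<beta> * norm c" using \<beta> by simp
    ultimately show "0 \<le> inner a c" by linarith
  qed
  have edual: "(\<lambda>v. inner (a + \<beta> *\<^sub>R b) v) \<in> dual_cone C" if b: "b \<in> Basis" for b
  proof (rule inner_dual_cone)
    fix c assume c: "c \<in> C"
    have "\<bar>inner c b\<bar> \<le> norm c" by (rule Basis_le_norm[OF b])
    then have "- norm c \<le> inner b c" by (simp add: inner_commute abs_le_iff)
    then have "\<beta> * (- norm c) \<le> \<beta> * inner b c" using \<beta> by (intro mult_left_mono) auto
    then have "- (\<beta> * norm c) \<le> \<beta> * inner b c" by simp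
    then show "0 \<le> inner (a + \<beta> *\<^sub>R b) c" using a[OF c] by (simp add: inner_add_left)
  qed
  have Lip: "norm (f \<sigma> q - f \<sigma> p) \<le> L * norm (q - p)"
    if \<sigma>: "\<sigma> \<in> {0..\<tau>0}" and p: "p \<in> cball x0 r" and q: "q \<in> cball x0 r" for \<sigma> p q
  proof -
    have comp: "\<bar>inner (f \<sigma> q - f \<sigma> p) b\<bar> \<le> 4 * Mw / (r * \<beta>) * norm (q - p)" if b: "b \<in> Basis" for b
    proof -
      have nb: "norm (a + \<beta> *\<^sub>R b) \<le> norm a + \<beta>"
        using norm_triangle_ineq[of a "\<beta> *\<^sub>R b"] \<beta> b by simp
      have k1: "\<bar>inner (a + \<beta> *\<^sub>R b) (f \<sigma> q) - inner (a + \<beta> *\<^sub>R b) (f \<sigma> p)\<bar> \<le> (2 * Mw / r) * norm (q - p)"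
        by (rule keyl[OF \<sigma> nb edual[OF b] p q])
      have k0: "\<bar>inner a (f \<sigma> q) - inner a (f \<sigma> p)\<bar> \<le> (2 * Mw / r) * norm (q - p)"
        by (rule keyl[OF \<sigma> _ adual p q]) (use \<beta> in simp)
      have eq: "\<beta> * inner (f \<sigma> q - f \<sigma> p) b = (inner (a + \<beta> *\<^sub>R b) (f \<sigma> q) - inner (a + \<beta> *\<^sub>R b) (f \<sigma> p))
            - (inner a (f \<sigma> q) - inner a (f \<sigma> p))"
        by (simp add: inner_add_left inner_diff_right inner_commute algebra_simps)
      have "\<beta> * \<bar>inner (f \<sigma> q - f \<sigma> p) b\<bar> \<le> 2 * ((2 * Mw / r) * norm (q - p))"
      proof -
        have "\<beta> * \<bar>inner (f \<sigma> q - f \<sigma> p) b\<bar> = \<bar>\<beta> * inner (f \<sigma> q - f \<sigma> p) b\<bar>" using \<beta> by (simp add: abs_mult)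
        then show ?thesis using k0 k1 eq by linarith
      qed
      then show ?thesis using \<beta> r by (simp add: field_simps)
    qed
    have "norm (f \<sigma> q - f \<sigma> p) \<le> (\<Sum>b\<in>Basis. \<bar>inner (f \<sigma> q - f \<sigma> p) b\<bar>)" by (rule norm_le_l1)
    also have "\<dots> \<le> (\<Sum>b\<in>(Basis::'a set). 4 * Mw / (r * \<beta>) * norm (q - p))" by (rule sum_mono[OF comp])
    also have "\<dots> = L * norm (q - p)" by (simp add: L_def)
    finally show ?thesis .
  qed
  have L0: "0 \<le> L" using Mf0 \<beta> r by (simp add: L_def Mw_def)
  show "\<exists>u>0. \<exists>L. \<forall>t\<in>cball t0 u \<inter> {0..\<tau>0}. L-lipschitz_on (cball x0 u \<inter> U) (f t)"
  proof (intro exI conjI ballI)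
    show "r > 0" by (rule r)
    fix t assume t: "t \<in> cball t0 r \<inter> {0..\<tau>0}"
    show "L-lipschitz_on (cball x0 r \<inter> U) (f t)"
    proof (rule lipschitz_onI[OF _ L0])
      fix x y assume "x \<in> cball x0 r \<inter> U" "y \<in> cball x0 r \<inter> U"
      then show "dist (f t x) (f t y) \<le> L * dist x y" using Lip[of t y x] t by (simp add: dist_norm)
    qed
  qed
qed

lemma lip_compact:
  assumes Q: "compact Q" "Q \<subseteq> U" and \<tau>0: "0 \<le> \<tau>0" "ereal \<tau>0 < T"
  shows "\<exists>L. \<forall>\<sigma>\<in>{0..\<tau>0}. L-lipschitz_on Q (f \<sigma>)"
proof -
  have ll: "local_lipschitz {0..\<tau>0} Q f" by (rule local_lipschitz_subset[OF local_lip[OF \<tau>0] order_refl Q(2)])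
  have cont: "continuous_on {0..\<tau>0} (\<lambda>t. f t x)" if "x \<in> Q" for x
  proof -
    have "continuous_on {0..\<tau>0} ((\<lambda>(t, x). f t x) \<circ> (\<lambda>t. (t, x)))"
      by (intro continuous_on_compose continuous_intros continuous_on_subset[OF contf])
        (use tdom[OF \<tau>0] that Q in auto)
    then show ?thesis by (simp add: o_def)
  qed
  obtain L where "\<And>t. t \<in> {0..\<tau>0} \<Longrightarrow> L-lipschitz_on Q (f t)"
    using local_lipschitz_compact_implies_lipschitz[OF ll Q(1) compact_Icc cont] by metis
  then show ?thesis by blast
qed

end




lemma dini_sq:
  fixes d :: "real \<Rightarrow> 'a::real_inner"
  assumes der: "(d has_vector_derivative D) (at \<sigma> within S)" and \<epsilon>: "\<epsilon> > 0"
    and key: "inner q D \<le> B"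
  shows "\<exists>\<delta>>0. \<forall>r\<in>S. \<sigma> < r \<and> r - \<sigma> < \<delta> \<longrightarrow>
           (norm (d r - d \<sigma> + q))^2 \<le> (norm q)^2 + (r - \<sigma>) * (2*B + \<epsilon>)"
proof -
  define e1 where "e1 = min 1 (\<epsilon> / (4 * (norm q + 1)))"
  have e1: "e1 > 0" "e1 \<le> 1" "e1 \<le> \<epsilon> / (4 * (norm q + 1))" proof -
    have "0 < 4 * (norm q + 1)" using norm_ge_zero[of q] by (smt (verit))
    then have "0 < \<epsilon> / (4 * (norm q + 1))" using \<epsilon> by simp
    then show "e1 > 0" "e1 \<le> 1" "e1 \<le> \<epsilon> / (4 * (norm q + 1))" by (auto simp: e1_def)
  qed
  obtain \<delta>1 where \<delta>1: "\<delta>1 > 0" and d1: "\<And>y. y \<in> S \<Longrightarrow> norm (y - \<sigma>) < \<delta>1 \<Longrightarrow>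
      norm (d y - d \<sigma> - (y - \<sigma>) *\<^sub>R D) \<le> e1 * norm (y - \<sigma>)"
    using der e1(1) unfolding has_vector_derivative_def has_derivative_within_alt by blast
  define \<delta> where "\<delta> = min \<delta>1 (\<epsilon> / (2 * (norm D + 1)^2))"
  have nD: "0 < norm D + 1" using norm_ge_zero[of D] by (smt (verit))
  then have "0 < (norm D + 1)^2" by simp
  then have "0 < \<epsilon> / (2 * (norm D + 1)^2)" using \<epsilon> by simp
  then have \<delta>: "\<delta> > 0" using \<delta>1 by (simp add: \<delta>_def)
  show ?thesis
  proof (intro exI conjI ballI impI, rule \<delta>)
    fix r assume r: "r \<in> S" and rr: "\<sigma> < r \<and> r - \<sigma> < \<delta>"
    define s where "s = r - \<sigma>"
    have s: "s > 0" "s < \<delta>1" "s \<le> \<epsilon> / (2 * (norm D + 1)^2)" using rr by (auto simp: s_def \<delta>_def)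
    define v where "v = d r - d \<sigma>"
    define E where "E = v - s *\<^sub>R D"
    have E: "norm E \<le> e1 * s" using d1[OF r] s by (simp add: E_def v_def s_def)
    have vE: "v = s *\<^sub>R D + E" by (simp add: E_def)
    have "(norm (v + q))^2 = (norm q)^2 + 2 * inner q v + (norm v)^2"
      by (simp add: power2_norm_eq_inner inner_add_left inner_add_right inner_commute)
    moreover have "inner q v \<le> s * B + norm q * (e1 * s)"
    proof -
      have "inner q v = s * inner q D + inner q E" by (simp add: vE inner_add_right)
      also have "\<dots> \<le> s * B + norm q * norm E"
        using key s Cauchy_Schwarz_ineq2[of q E] by (intro add_mono mult_left_mono) auto
      also have "\<dots> \<le> s * B + norm q * (e1 * s)" using E by (intro add_left_mono mult_left_mono) auto
      finally show ?thesis .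
    qed
    moreover have "(norm v)^2 \<le> s * (\<epsilon> / 2)"
    proof -
      have "norm v \<le> s * norm D + e1 * s" using norm_triangle_ineq[of "s *\<^sub>R D" E] E s by (simp add: vE)
      also have "\<dots> \<le> s * (norm D + 1)" using e1 s by (simp add: algebra_simps)
      finally have nv: "norm v \<le> s * (norm D + 1)" .
      have "(norm v)^2 \<le> (s * (norm D + 1))^2" by (rule power_mono[OF nv norm_ge_zero])
      also have "\<dots> = s * (s * (norm D + 1)^2)" by (simp add: power2_eq_square algebra_simps)
      also have "\<dots> \<le> s * (\<epsilon> / 2)"
      proof (rule mult_left_mono)
        have "0 < (norm D + 1)^2" using nD by simp
        then show "s * (norm D + 1)^2 \<le> \<epsilon> / 2" using s(3) by (simp add: field_simps)
      qed (use s in simp)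
      finally show ?thesis .
    qed
    moreover have "2 * (norm q * (e1 * s)) \<le> s * (\<epsilon> / 2)"
    proof -
      have "norm q * e1 \<le> norm q * (\<epsilon> / (4 * (norm q + 1)))" using e1 by (intro mult_left_mono) auto
      also have "\<dots> \<le> \<epsilon> / 4"
      proof -
        have n1: "0 < norm q + 1" using norm_ge_zero[of q] by (smt (verit))
        have "norm q * (\<epsilon> / (4 * (norm q + 1))) = (\<epsilon> / 4) * (norm q / (norm q + 1))" by (simp add: field_simps)
        also have "\<dots> \<le> (\<epsilon> / 4) * 1" using n1 \<epsilon> by (intro mult_left_mono) auto
        finally show ?thesis by simp
      qed
      finally have "norm q * e1 \<le> \<epsilon> / 4" .
      then have "s * (norm q * e1) \<le> s * (\<epsilon> / 4)" using s by (intro mult_left_mono) auto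
      then show ?thesis by (simp add: algebra_simps)
    qed
    ultimately have "(norm (v + q))^2 \<le> (norm q)^2 + s * (2 * B + \<epsilon>)"
      by (simp add: algebra_simps)
    then show "(norm (d r - d \<sigma> + q))^2 \<le> (norm q)^2 + (r - \<sigma>) * (2*B + \<epsilon>)"
      by (simp add: v_def s_def)
  qed
qed




context ode_setting begin

lemma cp_props:
  assumes "c \<in> C"
  shows "inner (d - closest_point C d) c \<le> 0" and "inner (d - closest_point C d) (closest_point C d) = 0"
    and "closest_point C d \<in> C"
proof -
  have cC: "convex C" by (rule pc_convex[OF proper])
  have ne: "C \<noteq> {}" using pc_zero[OF proper] by auto
  define p where "p = closest_point C d"
  have pC: "p \<in> C" unfolding p_def by (rule closest_point_in_set[OF closedC ne])
  then show "closest_point C d \<in> C" by (simp add: p_def)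
  have "inner (d - p) ((p + c) - p) \<le> 0"
    unfolding p_def by (rule closest_point_dot[OF cC closedC]) (use pc_add[OF proper pC assms] in \<open>simp add: p_def\<close>)
  then show "inner (d - closest_point C d) c \<le> 0" by (simp add: p_def)
  have "inner (d - p) ((p + p) - p) \<le> 0"
    unfolding p_def by (rule closest_point_dot[OF cC closedC]) (use pc_add[OF proper pC pC] in \<open>simp add: p_def\<close>)
  moreover have "inner (d - p) (0 - p) \<le> 0"
    unfolding p_def by (rule closest_point_dot[OF cC closedC]) (use pc_zero[OF proper] in simp)
  ultimately show "inner (d - closest_point C d) (closest_point C d) = 0" by (simp add: p_def)
qed

lemma comparison:
  assumes \<tau>: "0 \<le> \<tau>" "ereal \<tau> < T"
    and uU: "\<And>\<sigma>. \<sigma>\<in>{0..\<tau>} \<Longrightarrow> u \<sigma> \<in> U" and wU: "\<And>\<sigma>. \<sigma>\<in>{0..\<tau>} \<Longrightarrow> w \<sigma> \<in> U"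
    and ud: "\<And>\<sigma>. \<sigma>\<in>{0..\<tau>} \<Longrightarrow> (u has_vector_derivative f \<sigma> (u \<sigma>)) (at \<sigma> within {0..\<tau>})"
    and wd: "\<And>\<sigma>. \<sigma>\<in>{0..\<tau>} \<Longrightarrow> (w has_vector_derivative w' \<sigma>) (at \<sigma> within {0..\<tau>})"
    and sup: "\<And>\<sigma>. \<sigma>\<in>{0..\<tau>} \<Longrightarrow> cone_le C (f \<sigma> (w \<sigma>)) (w' \<sigma>)"
    and init: "cone_le C (u 0) (w 0)"
    and s: "s \<in> {0..\<tau>}"
  shows "cone_le C (u s) (w s)"
proof -
  have cC: "convex C" by (rule pc_convex[OF proper])
  have ne: "C \<noteq> {}" using pc_zero[OF proper] by auto
  define d where "d = (\<lambda>\<sigma>. w \<sigma> - u \<sigma>)"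
  define p where "p = (\<lambda>\<sigma>. closest_point C (d \<sigma>))"
  define h where "h = (\<lambda>\<sigma>. (norm (d \<sigma> - p \<sigma>))^2)"
  have uc: "continuous_on {0..\<tau>} u" by (rule continuous_on_vector_derivative[OF ud])
  have wc: "continuous_on {0..\<tau>} w" by (rule continuous_on_vector_derivative[OF wd])
  have dc: "continuous_on {0..\<tau>} d" unfolding d_def by (intro continuous_intros uc wc)
  have pc: "continuous_on {0..\<tau>} p" unfolding p_def
    by (rule continuous_on_compose2[OF continuous_on_closest_point[OF cC closedC ne] dc]) auto
  have hc: "continuous_on {0..\<tau>} h" unfolding h_def by (intro continuous_intros dc pc)
  have pC: "p \<sigma> \<in> C" for \<sigma> unfolding p_def by (rule closest_point_in_set[OF closedC ne])
  have wpU: "w \<sigma> - p \<sigma> \<in> U" if "\<sigma> \<in> {0..\<tau>}" for \<sigma>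
    using oreg wU[OF that] pC[of \<sigma>] unfolding order_regular_def cone_le_def by auto
  define Q where "Q = u ` {0..\<tau>} \<union> (\<lambda>\<sigma>. w \<sigma> - p \<sigma>) ` {0..\<tau>}"
  have Qc: "compact Q" unfolding Q_def
    by (intro compact_Un compact_continuous_image uc continuous_intros wc pc compact_Icc)
  have QU: "Q \<subseteq> U" unfolding Q_def using uU wpU by auto
  obtain L where L: "\<And>\<sigma>. \<sigma>\<in>{0..\<tau>} \<Longrightarrow> L-lipschitz_on Q (f \<sigma>)"
    using lip_compact[OF Qc QU \<tau>] by blast
  have L0: "0 \<le> L" using L[of 0] \<tau> lipschitz_on_nonneg by auto
  have h0: "h 0 = 0"
  proof -
    have "d 0 \<in> C" using init by (simp add: cone_le_def d_def)
    then have "p 0 = d 0" unfolding p_def by (rule closest_point_self)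
    then show ?thesis by (simp add: h_def)
  qed
  have hge: "0 \<le> h \<sigma>" for \<sigma> by (simp add: h_def)
  have dini: "\<exists>\<delta>>0. \<forall>r. \<sigma> < r \<and> r \<le> \<tau> \<and> r - \<sigma> < \<delta> \<longrightarrow>
               h r \<le> h \<sigma> + (r - \<sigma>) * (0 + (2*L) * max (h \<sigma>) 0 + \<epsilon>)"
    if \<sigma>: "\<sigma> \<in> {0..<\<tau>}" and \<epsilon>: "\<epsilon> > 0" for \<sigma> \<epsilon>
  proof -
    have \<sigma>': "\<sigma> \<in> {0..\<tau>}" using \<sigma> by auto
    have \<sigma>T: "\<sigma> \<in> time_dom T" using tdom[OF \<tau>] \<sigma>' by auto
    define q where "q = d \<sigma> - p \<sigma>"
    define D where "D = w' \<sigma> - f \<sigma> (u \<sigma>)"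
    have dd: "(d has_vector_derivative D) (at \<sigma> within {0..\<tau>})"
      unfolding d_def D_def by (intro derivative_intros wd ud \<sigma>')
    have qc: "inner q c \<le> 0" if "c \<in> C" for c using cp_props(1)[OF that] by (simp add: q_def p_def)
    have qp: "inner q (p \<sigma>) = 0" using cp_props(2)[OF pC[of \<sigma>]] by (simp add: q_def p_def)
    have key: "inner q D \<le> L * h \<sigma>"
    proof -
      have "inner q (w' \<sigma> - f \<sigma> (w \<sigma>)) \<le> 0" using qc sup[OF \<sigma>'] by (simp add: cone_le_def)
      then have 1: "inner q (w' \<sigma>) \<le> inner q (f \<sigma> (w \<sigma>))" by (simp add: inner_diff_right)
      define l where "l = (\<lambda>v. - inner q v)"
      have l: "l \<in> dual_cone C" unfolding l_def using qc
        by (simp add: dual_cone_def linear_compose_neg bounded_linear.linear[OF bounded_linear_inner_right])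
      have "cone_le C (w \<sigma> - p \<sigma>) (w \<sigma>)" using pC by (simp add: cone_le_def)
      moreover have "l (w \<sigma> - p \<sigma>) = l (w \<sigma>)" using qp by (simp add: l_def inner_diff_right)
      ultimately have "l (f \<sigma> (w \<sigma> - p \<sigma>)) \<le> l (f \<sigma> (w \<sigma>))"
        using qm[OF \<sigma>T] wpU[OF \<sigma>'] wU[OF \<sigma>'] l unfolding quasi_monotone_inc_def by blast
      then have 2: "inner q (f \<sigma> (w \<sigma>)) \<le> inner q (f \<sigma> (w \<sigma> - p \<sigma>))" by (simp add: l_def)
      have "inner q (f \<sigma> (w \<sigma> - p \<sigma>) - f \<sigma> (u \<sigma>)) \<le> norm q * norm (f \<sigma> (w \<sigma> - p \<sigma>) - f \<sigma> (u \<sigma>))"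
        by (rule Cauchy_Schwarz_ineq2[THEN abs_le_D1])
      also have "\<dots> \<le> norm q * (L * norm ((w \<sigma> - p \<sigma>) - u \<sigma>))"
      proof (rule mult_left_mono)
        have "w \<sigma> - p \<sigma> \<in> Q" "u \<sigma> \<in> Q" using \<sigma>' by (auto simp: Q_def)
        then show "norm (f \<sigma> (w \<sigma> - p \<sigma>) - f \<sigma> (u \<sigma>)) \<le> L * norm ((w \<sigma> - p \<sigma>) - u \<sigma>)"
          using lipschitz_onD[OF L[OF \<sigma>']] by (simp add: dist_norm)
      qed simp
      also have "\<dots> = L * h \<sigma>" by (simp add: h_def q_def d_def power2_eq_square algebra_simps)
      finally have 3: "inner q (f \<sigma> (w \<sigma> - p \<sigma>)) - inner q (f \<sigma> (u \<sigma>)) \<le> L * h \<sigma>"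
        by (simp add: inner_diff_right)
      show ?thesis using 1 2 3 by (simp add: D_def inner_diff_right)
    qed
    obtain \<delta> where \<delta>: "\<delta> > 0" and dl: "\<And>r. r\<in>{0..\<tau>} \<Longrightarrow> \<sigma> < r \<Longrightarrow> r - \<sigma> < \<delta> \<Longrightarrow>
        (norm (d r - d \<sigma> + q))^2 \<le> (norm q)^2 + (r - \<sigma>) * (2*(L * h \<sigma>) + \<epsilon>)"
      using dini_sq[OF dd \<epsilon> key] by blast
    show ?thesis
    proof (intro exI conjI allI impI, rule \<delta>)
      fix r assume r: "\<sigma> < r \<and> r \<le> \<tau> \<and> r - \<sigma> < \<delta>"
      then have r': "r \<in> {0..\<tau>}" using \<sigma> by auto
      have "h r = (dist (d r) (closest_point C (d r)))^2" by (simp add: h_def p_def dist_norm)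
      also have "\<dots> \<le> (dist (d r) (p \<sigma>))^2"
        by (intro power_mono closest_point_le[OF closedC pC]) auto
      also have "\<dots> = (norm (d r - d \<sigma> + q))^2" by (simp add: dist_norm q_def)
      also have "\<dots> \<le> (norm q)^2 + (r - \<sigma>) * (2*(L * h \<sigma>) + \<epsilon>)" using dl[OF r'] r by auto
      also have "\<dots> = h \<sigma> + (r - \<sigma>) * (0 + (2*L) * max (h \<sigma>) 0 + \<epsilon>)"
        using hge[of \<sigma>] by (simp add: h_def q_def)
      finally show "h r \<le> h \<sigma> + (r - \<sigma>) * (0 + (2*L) * max (h \<sigma>) 0 + \<epsilon>)" .
    qed
  qed
  have hs: "h s \<le> 0"
  proof (rule ccontr)
    assume "\<not> h s \<le> 0"
    then have hp: "h s > 0" by simp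
    define E where "E = exp ((2*L+1) * s)"
    have E: "E > 0" by (simp add: E_def)
    define \<eta> where "\<eta> = h s / (2 * E)"
    have \<eta>: "\<eta> > 0" using hp E by (simp add: \<eta>_def)
    have "h s \<le> (max (h 0) 0 + 0 + \<eta>) * exp ((2*L+1) * s)"
      by (rule gronwall_dini[OF hc _ order_refl \<eta> dini s]) (use L0 in auto)
    also have "\<dots> = h s / 2" using E by (simp add: h0 \<eta>_def E_def)
    finally show False using hp by simp
  qed
  then have "d s = p s" using hge[of s] by (simp add: h_def)
  then show ?thesis using pC[of s] by (simp add: cone_le_def d_def)
qed

end




lemma dini_real:
  fixes \<phi> :: "real \<Rightarrow> real"
  assumes der: "(\<phi> has_vector_derivative D\<phi>) (at \<sigma> within S)" and B: "D\<phi> \<le> B" and \<epsilon>: "\<epsilon> > 0"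
  shows "\<exists>\<delta>>0. \<forall>r\<in>S. \<sigma> < r \<and> r - \<sigma> < \<delta> \<longrightarrow> \<phi> r \<le> \<phi> \<sigma> + (r - \<sigma>) * (B + \<epsilon>)"
proof -
  obtain \<delta> where \<delta>: "\<delta> > 0" and d1: "\<And>y. y \<in> S \<Longrightarrow> norm (y - \<sigma>) < \<delta> \<Longrightarrow>
      norm (\<phi> y - \<phi> \<sigma> - (y - \<sigma>) *\<^sub>R D\<phi>) \<le> \<epsilon> * norm (y - \<sigma>)"
    using der \<epsilon> unfolding has_vector_derivative_def has_derivative_within_alt by blast
  show ?thesis
  proof (intro exI conjI ballI impI, rule \<delta>)
    fix r assume r: "r \<in> S" and rr: "\<sigma> < r \<and> r - \<sigma> < \<delta>"
    have "\<phi> r - \<phi> \<sigma> - (r - \<sigma>) * D\<phi> \<le> \<epsilon> * (r - \<sigma>)" using d1[OF r] rr by auto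
    moreover have "(r - \<sigma>) * D\<phi> \<le> (r - \<sigma>) * B" using B rr by (intro mult_left_mono) auto
    ultimately show "\<phi> r \<le> \<phi> \<sigma> + (r - \<sigma>) * (B + \<epsilon>)" by (simp add: algebra_simps)
  qed
qed

context ode_setting begin

lemma f_lower:
  assumes s0: "0 \<le> s0" "ereal s0 < T" and z: "z \<in> U" and adual: "(\<lambda>v. inner a v) \<in> dual_cone C"
  obtains A B where "0 \<le> A" "0 \<le> B" "\<And>\<sigma> v. \<sigma> \<in> {0..s0} \<Longrightarrow> v \<in> U \<Longrightarrow>
     - A - B * norm v \<le> inner a (f \<sigma> v)"
proof -
  obtain e where e: "e > 0" "cball z e \<subseteq> U" using openU z open_contains_cball by blast
  define r where "r = e" 
  have r: "r > 0" and rU: "cball z r \<subseteq> U" using e by (auto simp: r_def)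
  obtain Mf where Mf: "\<And>\<sigma> v. \<sigma>\<in>{0..s0} \<Longrightarrow> v\<in>cball z r \<Longrightarrow> norm (f \<sigma> v) \<le> Mf"
    using f_bound[OF compact_cball rU s0] by blast
  have Mf0: "0 \<le> Mf" using Mf[of 0 z] s0 r by (auto intro: order_trans[OF norm_ge_zero])
  define Ma where "Ma = norm a * Mf"
  have Ma0: "0 \<le> Ma" using Mf0 by (simp add: Ma_def)
  have Mab: "\<bar>inner a (f \<sigma> v)\<bar> \<le> Ma" if "\<sigma>\<in>{0..s0}" "v\<in>cball z r" for \<sigma> v
  proof -
    have "\<bar>inner a (f \<sigma> v)\<bar> \<le> norm a * norm (f \<sigma> v)" by (rule Cauchy_Schwarz_ineq2)
    also have "\<dots> \<le> norm a * Mf" using Mf[OF that] by (intro mult_left_mono) auto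
    finally show ?thesis by (simp add: Ma_def)
  qed
  define A where "A = 2 * Ma + 2 * Ma * norm z / r"
  define B where "B = 2 * Ma / r"
  show ?thesis
  proof (rule that)
    show "0 \<le> A" "0 \<le> B" using Ma0 r by (auto simp: A_def B_def)
    fix \<sigma> v assume \<sigma>: "\<sigma> \<in> {0..s0}" and v: "v \<in> U"
    have \<sigma>T: "\<sigma> \<in> time_dom T" using tdom[OF s0] \<sigma> by auto
    have lowb: "- 2 * Ma - B * norm (v - z) \<le> inner a (f \<sigma> v)"
    proof (cases "v = z")
      case True
      then show ?thesis using Mab[OF \<sigma>, of z] r Ma0 by (auto simp: B_def)
    next
      case False
      define Dv where "Dv = norm (v - z)"
      have Dv: "Dv > 0" using False by (simp add: Dv_def)
      define qq where "qq = z - (r / Dv) *\<^sub>R (v - z)"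
      have qq: "qq \<in> cball z r" using Dv r by (simp add: qq_def dist_norm Dv_def)
      define \<alpha> where "\<alpha> = r / (r + Dv)"
      have \<alpha>: "0 < \<alpha>" "\<alpha> \<le> 1" using r Dv by (auto simp: \<alpha>_def)
      have zc: "\<alpha> *\<^sub>R v + (1 - \<alpha>) *\<^sub>R qq = z"
      proof -
        have "(1 - \<alpha>) * (r / Dv) = \<alpha>" using r Dv by (simp add: \<alpha>_def field_simps)
        then have "\<alpha> *\<^sub>R v + (1 - \<alpha>) *\<^sub>R qq = \<alpha> *\<^sub>R v + (1 - \<alpha>) *\<^sub>R z - \<alpha> *\<^sub>R (v - z)"
          by (simp add: qq_def scaleR_diff_right)
        then show ?thesis by (simp add: algebra_simps)
      qed
      have "inner a (f \<sigma> z) \<le> \<alpha> * inner a (f \<sigma> v) + (1 - \<alpha>) * inner a (f \<sigma> qq)"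
        using l_convex[OF adual v _ _ _ \<sigma>T, of qq \<alpha>] qq rU \<alpha> zc by auto
      moreover have "- Ma \<le> inner a (f \<sigma> z)" using Mab[OF \<sigma>, of z] r by auto
      moreover have "(1 - \<alpha>) * inner a (f \<sigma> qq) \<le> (1 - \<alpha>) * Ma"
        using Mab[OF \<sigma> qq] \<alpha> by (intro mult_left_mono) auto
      moreover have "(1 - \<alpha>) * Ma \<le> Ma" using \<alpha> Ma0 by (simp add: mult_left_le_one_le)
      ultimately have "- 2 * Ma \<le> \<alpha> * inner a (f \<sigma> v)" by linarith
      then have "- 2 * Ma / \<alpha> \<le> inner a (f \<sigma> v)" using \<alpha> by (simp add: field_simps)
      moreover have "- 2 * Ma / \<alpha> = - 2 * Ma - B * norm (v - z)"
        using r Dv by (simp add: \<alpha>_def B_def Dv_def field_simps)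
      ultimately show ?thesis by simp
    qed
    have "B * norm (v - z) \<le> B * (norm v + norm z)"
      using norm_triangle_ineq4[of v z] Ma0 r by (intro mult_left_mono) (auto simp: B_def)
    moreover have "- A - B * norm v = - 2 * Ma - B * (norm v + norm z)" by (simp add: A_def B_def algebra_simps add_divide_distrib)
    ultimately show "- A - B * norm v \<le> inner a (f \<sigma> v)" using lowb by linarith
  qed
qed

lemma lower_bound:
  assumes s0: "0 \<le> s0" "ereal s0 < T" and z: "z \<in> U"
    and a: "\<And>c. c \<in> C \<Longrightarrow> \<beta> * norm c \<le> inner a c" and \<beta>: "\<beta> > 0"
    and Wb: "\<And>\<sigma>. \<sigma> \<in> {0..s0} \<Longrightarrow> norm (w \<sigma>) \<le> Wb"
  obtains R where "\<And>\<tau> u \<sigma>. \<tau> \<in> {0..s0} \<Longrightarrow> u 0 = z \<Longrightarrow> (\<And>\<sigma>. \<sigma>\<in>{0..\<tau>} \<Longrightarrow> u \<sigma> \<in> U) \<Longrightarrow>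
      (\<And>\<sigma>. \<sigma>\<in>{0..\<tau>} \<Longrightarrow> (u has_vector_derivative f \<sigma> (u \<sigma>)) (at \<sigma> within {0..\<tau>})) \<Longrightarrow>
      (\<And>\<sigma>. \<sigma>\<in>{0..\<tau>} \<Longrightarrow> cone_le C (u \<sigma>) (w \<sigma>)) \<Longrightarrow> \<sigma> \<in> {0..\<tau>} \<Longrightarrow> - R \<le> inner a (u \<sigma>)"
proof -
  have adual: "(\<lambda>v. inner a v) \<in> dual_cone C"
  proof (rule inner_dual_cone)
    fix c assume "c \<in> C"
    then have "\<beta> * norm c \<le> inner a c" by (rule a)
    moreover have "0 \<le> \<beta> * norm c" using \<beta> by simp
    ultimately show "0 \<le> inner a c" by linarith
  qed
  obtain A B where AB: "0 \<le> A" "0 \<le> B" and fl: "\<And>\<sigma> v. \<sigma> \<in> {0..s0} \<Longrightarrow> v \<in> U \<Longrightarrow>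
     - A - B * norm v \<le> inner a (f \<sigma> v)"
    using f_lower[OF s0 z adual] by blast
  have Wb0: "0 \<le> Wb" using Wb[of 0] s0 by (auto intro: order_trans[OF norm_ge_zero])
  define K where "K = B / \<beta>"
  define P0 where "P0 = A + B * Wb + B * (norm a * Wb) / \<beta>"
  have K0: "0 \<le> K" using AB \<beta> by (simp add: K_def)
  have P00: "0 \<le> P0" using AB \<beta> Wb0 by (simp add: P0_def)
  define R where "R = (\<bar>inner a z\<bar> + P0 + 1) * exp ((K+1) * s0)"
  show ?thesis
  proof (rule that)
    fix \<tau> u \<sigma>
    assume \<tau>: "\<tau> \<in> {0..s0}" and u0: "u 0 = z" and uU: "\<And>\<sigma>. \<sigma>\<in>{0..\<tau>} \<Longrightarrow> u \<sigma> \<in> U"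
      and ud: "\<And>\<sigma>. \<sigma>\<in>{0..\<tau>} \<Longrightarrow> (u has_vector_derivative f \<sigma> (u \<sigma>)) (at \<sigma> within {0..\<tau>})"
      and uw: "\<And>\<sigma>. \<sigma>\<in>{0..\<tau>} \<Longrightarrow> cone_le C (u \<sigma>) (w \<sigma>)" and \<sigma>: "\<sigma> \<in> {0..\<tau>}"
    define m where "m = (\<lambda>\<sigma>. - inner a (u \<sigma>))"
    have uc: "continuous_on {0..\<tau>} u" by (rule continuous_on_vector_derivative[OF ud])
    have mc: "continuous_on {0..\<tau>} m" unfolding m_def by (intro continuous_intros uc)
    have nu: "norm (u r) \<le> Wb + (norm a * Wb + max (m r) 0) / \<beta>" if r: "r \<in> {0..\<tau>}" for r
    proof -
      define c where "c = w r - u r"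
      have cC: "c \<in> C" using uw[OF r] by (simp add: cone_le_def c_def)
      have r0: "r \<in> {0..s0}" using r \<tau> by auto
      have "\<beta> * norm c \<le> inner a c" by (rule a[OF cC])
      also have "\<dots> = inner a (w r) + m r" by (simp add: c_def m_def inner_diff_right)
      also have "\<dots> \<le> norm a * Wb + max (m r) 0"
      proof -
        have "inner a (w r) \<le> norm a * norm (w r)" by (rule Cauchy_Schwarz_ineq2[THEN abs_le_D1])
        also have "\<dots> \<le> norm a * Wb" using Wb[OF r0] by (intro mult_left_mono) auto
        finally show ?thesis by simp
      qed
      finally have "norm c \<le> (norm a * Wb + max (m r) 0) / \<beta>" using \<beta> by (simp add: field_simps)
      moreover have "norm (u r) \<le> norm (w r) + norm c"
        using norm_triangle_ineq4[of "w r" c] by (simp add: c_def)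
      ultimately show ?thesis using Wb[OF r0] by simp
    qed
    have dini: "\<exists>\<delta>>0. \<forall>r. \<rho> < r \<and> r \<le> \<tau> \<and> r - \<rho> < \<delta> \<longrightarrow> m r \<le> m \<rho> + (r - \<rho>) * (P0 + K * max (m \<rho>) 0 + \<epsilon>)"
      if \<rho>: "\<rho> \<in> {0..<\<tau>}" and \<epsilon>: "\<epsilon> > 0" for \<rho> \<epsilon>
    proof -
      have \<rho>': "\<rho> \<in> {0..\<tau>}" using \<rho> by auto
      have \<rho>0: "\<rho> \<in> {0..s0}" using \<rho>' \<tau> by auto
      have md: "(m has_vector_derivative - inner a (f \<rho> (u \<rho>))) (at \<rho> within {0..\<tau>})"
        unfolding m_def
        using bounded_linear.has_vector_derivative[OF bounded_linear_inner_right ud[OF \<rho>'], of a]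
        by (intro derivative_intros) auto
      have "- inner a (f \<rho> (u \<rho>)) \<le> A + B * norm (u \<rho>)" using fl[OF \<rho>0 uU[OF \<rho>']] by simp
      also have "\<dots> \<le> A + B * (Wb + (norm a * Wb + max (m \<rho>) 0) / \<beta>)"
        using nu[OF \<rho>'] AB by (intro add_left_mono mult_left_mono) auto
      also have "\<dots> = P0 + K * max (m \<rho>) 0" by (simp add: P0_def K_def field_simps add_divide_distrib)
      finally have mb: "- inner a (f \<rho> (u \<rho>)) \<le> P0 + K * max (m \<rho>) 0" .
      obtain \<delta> where "\<delta> > 0" "\<forall>r\<in>{0..\<tau>}. \<rho> < r \<and> r - \<rho> < \<delta> \<longrightarrow> m r \<le> m \<rho> + (r - \<rho>) * (P0 + K * max (m \<rho>) 0 + \<epsilon>)"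
        using dini_real[OF md mb \<epsilon>] by blast
      then show ?thesis using \<rho> by (intro exI[of _ \<delta>]) auto
    qed
    have "m \<sigma> \<le> (max (m 0) 0 + P0 + 1) * exp ((K+1) * \<sigma>)"
      by (rule gronwall_dini[OF mc K0 P00 _ dini \<sigma>]) auto
    also have "\<dots> \<le> R"
      unfolding R_def
    proof (rule mult_mono)
      show "max (m 0) 0 + P0 + 1 \<le> \<bar>inner a z\<bar> + P0 + 1" using u0 by (simp add: m_def)
      show "exp ((K + 1) * \<sigma>) \<le> exp ((K + 1) * s0)" using \<sigma> \<tau> K0 by (subst exp_le_cancel_iff) (intro mult_left_mono, auto)
    qed (use P00 in auto)
    finally show "- R \<le> inner a (u \<sigma>)" by (simp add: m_def)
  qed
qed

end




lemma ode_sol_restrict: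
  assumes "ode_sol_on T U f x s \<phi>" "0 \<le> s'" "s' \<le> s"
  shows "ode_sol_on T U f x s' \<phi>"
proof -
  have sub: "{0..s'} \<subseteq> {0..s}" using assms by auto
  have "ereal s' < T" using assms by (auto simp: ode_sol_on_def intro: le_less_trans[of _ "ereal s"])
  moreover have "\<forall>\<tau>\<in>{0..s'}. \<phi> \<tau> \<in> U \<and> (\<phi> has_vector_derivative f \<tau> (\<phi> \<tau>)) (at \<tau> within {0..s'})"
  proof
    fix \<tau> assume \<tau>: "\<tau> \<in> {0..s'}"
    then have "\<tau> \<in> {0..s}" using sub by auto
    then have "\<phi> \<tau> \<in> U \<and> (\<phi> has_vector_derivative f \<tau> (\<phi> \<tau>)) (at \<tau> within {0..s})"
      using assms(1) by (simp add: ode_sol_on_def)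
    then show "\<phi> \<tau> \<in> U \<and> (\<phi> has_vector_derivative f \<tau> (\<phi> \<tau>)) (at \<tau> within {0..s'})"
      using has_vector_derivative_within_subset[OF _ sub] by blast
  qed
  ultimately show ?thesis using assms unfolding ode_sol_on_def by auto
qed

lemma theta_ge: "ode_sol_on T U f x s \<phi> \<Longrightarrow> ereal s \<le> theta_f T U f x"
  unfolding theta_f_def by (rule SUP_upper) auto

lemma D_f_sol:
  assumes "x \<in> D_f T U f t"
  shows "\<exists>s \<phi>. ereal t < ereal s \<and> ode_sol_on T U f x s \<phi>"
  using assms unfolding D_f_def theta_f_def by (auto simp: less_SUP_iff)

context ode_setting begin

lemma sol_unique:
  assumes 1: "ode_sol_on T U f x s1 \<phi>1" and 2: "ode_sol_on T U f x s2 \<phi>2"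
    and \<sigma>: "0 \<le> \<sigma>" "\<sigma> \<le> s1" "\<sigma> \<le> s2"
  shows "\<phi>1 \<sigma> = \<phi>2 \<sigma>"
proof -
  define \<tau> where "\<tau> = min s1 s2"
  have \<tau>: "0 \<le> \<tau>" "\<tau> \<le> s1" "\<tau> \<le> s2" using \<sigma> by (auto simp: \<tau>_def)
  have a: "ode_sol_on T U f x \<tau> \<phi>1" by (rule ode_sol_restrict[OF 1 \<tau>(1,2)])
  have b: "ode_sol_on T U f x \<tau> \<phi>2" by (rule ode_sol_restrict[OF 2 \<tau>(1,3)])
  have \<tau>T: "ereal \<tau> < T" using a by (simp add: ode_sol_on_def)
  have \<sigma>': "\<sigma> \<in> {0..\<tau>}" using \<sigma> by (auto simp: \<tau>_def)
  have le: "cone_le C (p \<sigma>) (q \<sigma>)" if p: "ode_sol_on T U f x \<tau> p" and q: "ode_sol_on T U f x \<tau> q" for p q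
    by (rule comparison[OF \<tau>(1) \<tau>T, of p q "\<lambda>\<sigma>. f \<sigma> (q \<sigma>)"])
       (use p q \<sigma>' in \<open>auto simp: ode_sol_on_def cone_le_refl[OF proper]\<close>)
  show ?thesis using le[OF a b] le[OF b a] by (rule cone_le_antisym[OF proper])
qed

lemma psi_eq:
  assumes sol: "ode_sol_on T U f x s \<phi>" and t: "0 \<le> t" "t \<le> s"
  shows "psi_f T U f t x = \<phi> t"
  unfolding psi_f_def
proof (rule the_equality)
  show "\<exists>s' \<phi>'. t \<le> s' \<and> ode_sol_on T U f x s' \<phi>' \<and> \<phi>' t = \<phi> t" using sol t by blast
  fix y assume "\<exists>s' \<phi>'. t \<le> s' \<and> ode_sol_on T U f x s' \<phi>' \<and> \<phi>' t = y"
  then obtain s' \<phi>' where "t \<le> s'" "ode_sol_on T U f x s' \<phi>'" "\<phi>' t = y" by blast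
  then show "y = \<phi> t" using sol_unique[OF _ sol, of s' \<phi>' t] t by auto
qed

end




context ode_setting begin

lemma main_step:
  assumes t: "t \<in> time_dom T" and x: "x \<in> D_f T U f t" and y: "y \<in> D_f T U f t"
    and c: "0 \<le> c" "c \<le> 1"
  shows "c *\<^sub>R x + (1-c) *\<^sub>R y \<in> D_f T U f t \<and>
    cone_le C (psi_f T U f t (c *\<^sub>R x + (1-c) *\<^sub>R y)) (c *\<^sub>R psi_f T U f t x + (1-c) *\<^sub>R psi_f T U f t y)"
proof -
  have t0: "0 \<le> t" using t by (simp add: time_dom_def)
  obtain sx \<phi>x where sx: "ereal t < ereal sx" and solx0: "ode_sol_on T U f x sx \<phi>x" using D_f_sol[OF x] by blast
  obtain sy \<phi>y where sy: "ereal t < ereal sy" and soly0: "ode_sol_on T U f y sy \<phi>y" using D_f_sol[OF y] by blast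
  define s0 where "s0 = min sx sy"
  have ts0: "t < s0" using sx sy by (simp add: s0_def)
  have s00: "0 \<le> s0" using t0 ts0 by simp
  have solx: "ode_sol_on T U f x s0 \<phi>x" by (rule ode_sol_restrict[OF solx0 s00]) (simp add: s0_def)
  have soly: "ode_sol_on T U f y s0 \<phi>y" by (rule ode_sol_restrict[OF soly0 s00]) (simp add: s0_def)
  have s0T: "ereal s0 < T" using solx by (simp add: ode_sol_on_def)
  have s0': "0 \<le> s0" "ereal s0 < T" using s00 s0T by auto
  have tdom0: "\<sigma> \<in> time_dom T" if "\<sigma> \<in> {0..s0}" for \<sigma> using tdom[OF s0'] that by auto
  have x0: "\<phi>x 0 = x" and xU: "\<And>\<sigma>. \<sigma>\<in>{0..s0} \<Longrightarrow> \<phi>x \<sigma> \<in> U"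
    and xd: "\<And>\<sigma>. \<sigma>\<in>{0..s0} \<Longrightarrow> (\<phi>x has_vector_derivative f \<sigma> (\<phi>x \<sigma>)) (at \<sigma> within {0..s0})"
    using solx by (auto simp: ode_sol_on_def)
  have y0: "\<phi>y 0 = y" and yU: "\<And>\<sigma>. \<sigma>\<in>{0..s0} \<Longrightarrow> \<phi>y \<sigma> \<in> U"
    and yd: "\<And>\<sigma>. \<sigma>\<in>{0..s0} \<Longrightarrow> (\<phi>y has_vector_derivative f \<sigma> (\<phi>y \<sigma>)) (at \<sigma> within {0..s0})"
    using soly by (auto simp: ode_sol_on_def)
  define z where "z = c *\<^sub>R x + (1-c) *\<^sub>R y"
  have xU0: "x \<in> U" and yU0: "y \<in> U" using x y by (auto simp: D_f_def)
  have zU: "z \<in> U" unfolding z_def by (rule convexD[OF convU xU0 yU0]) (use c in auto)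
  define w where "w = (\<lambda>\<sigma>. c *\<^sub>R \<phi>x \<sigma> + (1-c) *\<^sub>R \<phi>y \<sigma>)"
  define w' where "w' = (\<lambda>\<sigma>. c *\<^sub>R f \<sigma> (\<phi>x \<sigma>) + (1-c) *\<^sub>R f \<sigma> (\<phi>y \<sigma>))"
  have wU: "w \<sigma> \<in> U" if "\<sigma> \<in> {0..s0}" for \<sigma>
    unfolding w_def by (rule convexD[OF convU xU[OF that] yU[OF that]]) (use c in auto)
  have wd: "(w has_vector_derivative w' \<sigma>) (at \<sigma> within {0..s0})" if "\<sigma> \<in> {0..s0}" for \<sigma>
    unfolding w_def w'_def
    by (intro has_vector_derivative_add bounded_linear.has_vector_derivative[OF bounded_linear_scaleR_right] xd yd that)
  have wsup: "cone_le C (f \<sigma> (w \<sigma>)) (w' \<sigma>)" if "\<sigma> \<in> {0..s0}" for \<sigma>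
    using cm[OF tdom0[OF that]] xU[OF that] yU[OF that] c unfolding convex_map_def w_def w'_def by blast
  have wc: "continuous_on {0..s0} w" by (rule continuous_on_vector_derivative[OF wd])
  have w0: "w 0 = z" by (simp add: w_def z_def x0 y0)
  obtain Wb where Wb: "\<And>\<sigma>. \<sigma> \<in> {0..s0} \<Longrightarrow> norm (w \<sigma>) \<le> Wb"
    using compact_imp_bounded[OF compact_continuous_image[OF wc compact_Icc]] bounded_iff by (metis imageI)
  obtain a \<beta> where \<beta>: "\<beta> > 0" and a: "\<And>c. c \<in> C \<Longrightarrow> \<beta> * norm c \<le> inner a c"
    using pc_dual_interior[OF closedC proper] by blast
  obtain R where R: "\<And>\<tau> u \<sigma>. \<tau> \<in> {0..s0} \<Longrightarrow> u 0 = z \<Longrightarrow> (\<And>\<sigma>. \<sigma>\<in>{0..\<tau>} \<Longrightarrow> u \<sigma> \<in> U) \<Longrightarrow>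
      (\<And>\<sigma>. \<sigma>\<in>{0..\<tau>} \<Longrightarrow> (u has_vector_derivative f \<sigma> (u \<sigma>)) (at \<sigma> within {0..\<tau>})) \<Longrightarrow>
      (\<And>\<sigma>. \<sigma>\<in>{0..\<tau>} \<Longrightarrow> cone_le C (u \<sigma>) (w \<sigma>)) \<Longrightarrow> \<sigma> \<in> {0..\<tau>} \<Longrightarrow> - R \<le> inner a (u \<sigma>)"
    using lower_bound[where \<beta>=\<beta> and a=a and w=w and Wb=Wb, OF s0' zU a \<beta> Wb] by blast
  define R2 where "R2 = max R (- inner a z)"
  define S where "S = ({0..s0} \<times> C) \<inter> (\<lambda>p. inner a (w (fst p) - snd p)) -` {-R2..}"
  define K where "K = (\<lambda>p. w (fst p) - snd p) ` S"
  have contS: "continuous_on ({0..s0} \<times> C) (\<lambda>p. w (fst p) - snd p)"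
    by (intro continuous_intros continuous_on_compose2[OF wc]) auto
  have Sc: "compact S"
  proof (subst compact_eq_bounded_closed, rule conjI[rotated])
    show "closed S" unfolding S_def
      by (rule continuous_closed_preimage) (auto intro!: continuous_intros contS closed_Times closedC)
    define Rc where "Rc = (norm a * Wb + R2) / \<beta>"
    have "S \<subseteq> {0..s0} \<times> cball 0 Rc"
    proof
      fix p assume p: "p \<in> S"
      then obtain \<sigma> v where pv: "p = (\<sigma>, v)" "\<sigma> \<in> {0..s0}" "v \<in> C" "- R2 \<le> inner a (w \<sigma> - v)"
        by (auto simp: S_def)
      have "\<beta> * norm v \<le> inner a v" by (rule a[OF pv(3)])
      also have "\<dots> = inner a (w \<sigma>) - inner a (w \<sigma> - v)" by (simp add: inner_diff_right)
      also have "\<dots> \<le> norm a * Wb + R2"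
      proof -
        have "inner a (w \<sigma>) \<le> norm a * norm (w \<sigma>)" by (rule Cauchy_Schwarz_ineq2[THEN abs_le_D1])
        also have "\<dots> \<le> norm a * Wb" using Wb[OF pv(2)] by (intro mult_left_mono) auto
        finally show ?thesis using pv(4) by simp
      qed
      finally have "norm v \<le> Rc" using \<beta> by (simp add: Rc_def field_simps)
      then show "p \<in> {0..s0} \<times> cball 0 Rc" using pv by simp
    qed
    then show "bounded S" by (rule bounded_subset[OF bounded_Times[OF compact_imp_bounded[OF compact_Icc] bounded_cball]])
  qed
  have Kc: "compact K" unfolding K_def
    by (rule compact_continuous_image[OF continuous_on_subset[OF contS] Sc]) (auto simp: S_def)
  have KU: "K \<subseteq> U"
  proof
    fix v assume "v \<in> K"
    then obtain \<sigma> d where sd: "\<sigma> \<in> {0..s0}" "d \<in> C" "v = w \<sigma> - d" by (auto simp: K_def S_def)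
    then have "cone_le C v (w \<sigma>)" by (simp add: cone_le_def)
    then show "v \<in> U" using oreg wU[OF sd(1)] unfolding order_regular_def by blast
  qed
  have Kmem: "u \<in> K" if "\<sigma> \<in> {0..s0}" "cone_le C u (w \<sigma>)" "- R2 \<le> inner a u" for u \<sigma>
  proof -
    have "(\<sigma>, w \<sigma> - u) \<in> S" using that by (simp add: S_def cone_le_def)
    then show ?thesis unfolding K_def by (rule rev_image_eqI) simp
  qed
  have zK: "z \<in> K" by (rule Kmem[of 0]) (use s00 w0 cone_le_refl[OF proper] in \<open>auto simp: R2_def\<close>)
  define K1 where "K1 = convex hull K"
  have K1c: "compact K1" unfolding K1_def by (rule compact_convex_hull[OF Kc])
  have K1U: "K1 \<subseteq> U" unfolding K1_def by (rule hull_minimal[where S=convex, OF KU convU])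
  have KK1: "K \<subseteq> K1" unfolding K1_def by (rule hull_subset)
  obtain \<delta> where \<delta>: "\<delta> > 0" and \<delta>U: "(\<Union>x\<in>K1. cball x \<delta>) \<subseteq> U"
    using compact_subset_open_imp_cball_epsilon_subset[OF K1c openU K1U] by blast
  define K2 where "K2 = (\<Union>p\<in>K1. \<Union>q\<in>cball 0 \<delta>. {p + q})"
  have K2c: "compact K2" unfolding K2_def by (intro compact_sums' K1c compact_cball)
  have K2cv: "convex K2" unfolding K2_def by (intro convex_sums convex_convex_hull convex_cball) (simp add: K1_def)
  have K2U: "K2 \<subseteq> U"
  proof
    fix v assume "v \<in> K2"
    then obtain p q where "p \<in> K1" "q \<in> cball 0 \<delta>" "v = p + q" by (auto simp: K2_def)
    then have "v \<in> cball p \<delta>" by (simp add: dist_norm)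
    then show "v \<in> U" using \<delta>U \<open>p \<in> K1\<close> by blast
  qed
  have ballK2: "cball v \<delta> \<subseteq> K2" if "v \<in> K" for v
  proof
    fix p assume "p \<in> cball v \<delta>"
    then have "p - v \<in> cball 0 \<delta>" by (simp add: dist_norm norm_minus_commute)
    moreover have "v \<in> K1" using that KK1 by auto
    ultimately show "p \<in> K2" unfolding K2_def by (intro UN_I[of v] UN_I[of "p - v"]) auto
  qed
  have KK2: "K \<subseteq> K2" using ballK2 \<delta> by force
  have K2ne: "K2 \<noteq> {}" using zK KK2 by auto
  have K2cl: "closed K2" by (rule compact_imp_closed[OF K2c])
  obtain L where L: "\<And>\<sigma>. \<sigma>\<in>{0..s0} \<Longrightarrow> L-lipschitz_on K2 (f \<sigma>)"
    using lip_compact[OF K2c K2U s0'] by blast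
  have L0: "0 \<le> L" using L[of 0] s00 lipschitz_on_nonneg by auto
  obtain Mf where Mf: "\<And>\<sigma> v. \<sigma>\<in>{0..s0} \<Longrightarrow> v \<in> K2 \<Longrightarrow> norm (f \<sigma> v) \<le> Mf"
    using f_bound[OF K2c K2U s0'] by blast
  define P where "P = closest_point K2"
  have PK2: "P v \<in> K2" for v unfolding P_def by (rule closest_point_in_set[OF K2cl K2ne])
  have Pid: "P v = v" if "v \<in> K2" for v unfolding P_def by (rule closest_point_self[OF that])
  have Pc: "continuous_on A P" for A unfolding P_def by (rule continuous_on_closest_point[OF K2cv K2cl K2ne])
  have Plip: "norm (P v - P v') \<le> norm (v - v')" for v v'
    using closest_point_lipschitz[OF K2cv K2cl K2ne, of v v'] by (simp add: P_def dist_norm)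
  define F where "F = (\<lambda>\<sigma> v. f \<sigma> (P v))"
  obtain u where u0: "u 0 = z" and uc: "continuous_on {0..s0} u"
    and ud: "\<And>\<sigma>. \<sigma>\<in>{0..s0} \<Longrightarrow> (u has_vector_derivative F \<sigma> (u \<sigma>)) (at \<sigma> within {0..s0})"
  proof -
    have "\<exists>u. u 0 = z \<and> continuous_on {0..s0} u \<and>
      (\<forall>\<sigma>\<in>{0..s0}. (u has_vector_derivative F \<sigma> (u \<sigma>)) (at \<sigma> within {0..s0}))"
    proof (rule picard_global[OF s00 L0])
      fix v :: "real \<Rightarrow> 'a" assume vc: "continuous_on {0..s0} v"
      have "continuous_on {0..s0} ((\<lambda>(t, x). f t x) \<circ> (\<lambda>r. (r, P (v r))))"
      proof (rule continuous_on_compose)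
        show "continuous_on {0..s0} (\<lambda>r. (r, P (v r)))"
          by (intro continuous_intros continuous_on_compose2[OF Pc vc]) auto
        show "continuous_on ((\<lambda>r. (r, P (v r))) ` {0..s0}) (\<lambda>(t, x). f t x)"
          by (rule continuous_on_subset[OF contf]) (use tdom0 PK2 K2U in auto)
      qed
      then show "continuous_on {0..s0} (\<lambda>r. F r (v r))" by (simp add: F_def o_def)
    next
      fix \<sigma> v v' assume \<sigma>: "\<sigma> \<in> {0..s0}"
      have "norm (F \<sigma> v - F \<sigma> v') \<le> L * norm (P v - P v')"
        using lipschitz_onD[OF L[OF \<sigma>] PK2 PK2] by (simp add: F_def dist_norm)
      also have "\<dots> \<le> L * norm (v - v')" by (rule mult_left_mono[OF Plip L0])
      finally show "norm (F \<sigma> v - F \<sigma> v') \<le> L * norm (v - v')" .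
    next
      fix \<sigma> v assume \<sigma>: "\<sigma> \<in> {0..s0}"
      show "norm (F \<sigma> v) \<le> Mf" unfolding F_def by (rule Mf[OF \<sigma> PK2])
    qed
    then show ?thesis using that by blast
  qed
  have good: "(\<forall>\<sigma>\<in>{0..\<tau>}. u \<sigma> \<in> U \<and> (u has_vector_derivative f \<sigma> (u \<sigma>)) (at \<sigma> within {0..\<tau>}))
      \<and> (\<forall>\<sigma>\<in>{0..\<tau>}. cone_le C (u \<sigma>) (w \<sigma>) \<and> u \<sigma> \<in> K)"
    if \<tau>: "\<tau> \<in> {0..s0}" and inK2: "\<And>\<sigma>. \<sigma> \<in> {0..\<tau>} \<Longrightarrow> u \<sigma> \<in> K2" for \<tau>
  proof -
    have sub: "{0..\<tau>} \<subseteq> {0..s0}" using \<tau> by auto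
    have \<tau>': "0 \<le> \<tau>" "ereal \<tau> < T" using \<tau> s0T by (auto intro: le_less_trans[of _ "ereal s0"])
    have uU: "u \<sigma> \<in> U" if "\<sigma> \<in> {0..\<tau>}" for \<sigma> using inK2[OF that] K2U by auto
    have udt: "(u has_vector_derivative f \<sigma> (u \<sigma>)) (at \<sigma> within {0..\<tau>})" if \<sigma>: "\<sigma> \<in> {0..\<tau>}" for \<sigma>
    proof -
      have "(u has_vector_derivative F \<sigma> (u \<sigma>)) (at \<sigma> within {0..\<tau>})"
        using has_vector_derivative_within_subset[OF ud sub] \<sigma> sub by auto
      then show ?thesis using Pid[OF inK2[OF \<sigma>]] by (simp add: F_def)
    qed
    have wdt: "(w has_vector_derivative w' \<sigma>) (at \<sigma> within {0..\<tau>})" if \<sigma>: "\<sigma> \<in> {0..\<tau>}" for \<sigma>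
      using has_vector_derivative_within_subset[OF wd sub] \<sigma> sub by auto
    have le: "cone_le C (u \<sigma>) (w \<sigma>)" if \<sigma>: "\<sigma> \<in> {0..\<tau>}" for \<sigma>
      by (rule comparison[OF \<tau>' uU _ udt wdt _ _ \<sigma>]) (use sub wU wsup u0 w0 cone_le_refl[OF proper] in auto)
    have lb: "- R \<le> inner a (u \<sigma>)" if \<sigma>: "\<sigma> \<in> {0..\<tau>}" for \<sigma>
      by (rule R[OF \<tau> u0 uU udt le \<sigma>])
    have "u \<sigma> \<in> K" if \<sigma>: "\<sigma> \<in> {0..\<tau>}" for \<sigma>
    proof (rule Kmem[of \<sigma>])
      show "\<sigma> \<in> {0..s0}" using \<sigma> sub by auto
      show "cone_le C (u \<sigma>) (w \<sigma>)" by (rule le[OF \<sigma>])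
      have "R \<le> R2" by (simp add: R2_def)
      then show "- R2 \<le> inner a (u \<sigma>)" using lb[OF \<sigma>] by linarith
    qed
    then show ?thesis using uU udt le by blast
  qed
  have allK2: "\<forall>\<sigma>\<in>{0..s0}. u \<sigma> \<in> K2"
  proof (rule ccontr)
    assume nt: "\<not> (\<forall>\<sigma>\<in>{0..s0}. u \<sigma> \<in> K2)"
    define B where "B = {\<sigma>\<in>{0..s0}. u \<sigma> \<notin> K2}"
    have Bne: "B \<noteq> {}" using nt by (auto simp: B_def)
    define \<sigma>1 where "\<sigma>1 = Inf B"
    have bdd: "bdd_below B" unfolding B_def by (rule bdd_belowI[of _ 0]) auto
    have s1le: "\<sigma>1 \<le> b" if "b \<in> B" for b using cInf_lower[OF that bdd] by (simp add: \<sigma>1_def)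
    have s1ge: "0 \<le> \<sigma>1" unfolding \<sigma>1_def using Bne by (intro cInf_greatest) (auto simp: B_def)
    obtain b0 where b0: "b0 \<in> B" using Bne by auto
    have s1s0: "\<sigma>1 \<le> s0" using s1le[OF b0] b0 by (auto simp: B_def)
    have before: "u \<sigma> \<in> K" if \<sigma>: "\<sigma> \<in> {0..<\<sigma>1}" for \<sigma>
    proof -
      have "u r \<in> K2" if "r \<in> {0..\<sigma>}" for r
      proof -
        have "r \<notin> B" using that \<sigma> s1le by force
        then show ?thesis using that \<sigma> s1s0 by (auto simp: B_def)
      qed
      then show ?thesis using good[of \<sigma>] \<sigma> s1s0 by auto
    qed
    have us1: "u \<sigma>1 \<in> K"
    proof (cases "\<sigma>1 = 0")
      case True then show ?thesis using u0 zK by simp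
    next
      case False
      then have pos: "\<sigma>1 > 0" using s1ge by simp
      have cl: "closure {0..<\<sigma>1} = {0..\<sigma>1}" using pos by simp
      have "u ` closure {0..<\<sigma>1} \<subseteq> K"
        by (rule image_closure_subset) (use before compact_imp_closed[OF Kc] s1s0 in
            \<open>auto simp: cl intro: continuous_on_subset[OF uc]\<close>)
      then show ?thesis using cl s1ge by auto
    qed
    have s1B: "\<sigma>1 \<notin> B" using us1 KK2 by (auto simp: B_def)
    have "continuous (at \<sigma>1 within {0..s0}) u" using uc s1ge s1s0 by (simp add: continuous_on_eq_continuous_within)
    then obtain e where e: "e > 0" and ee: "\<And>r. r \<in> {0..s0} \<Longrightarrow> dist r \<sigma>1 < e \<Longrightarrow> dist (u r) (u \<sigma>1) < \<delta>"
      using \<delta> unfolding continuous_within_eps_delta by blast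
    have "\<exists>b\<in>B. b < \<sigma>1 + e" using cInf_less_iff[of B "\<sigma>1 + e"] Bne bdd e by (auto simp: \<sigma>1_def)
    then obtain b where bB: "b \<in> B" and bl: "b < \<sigma>1 + e" by auto
    have bgt: "\<sigma>1 \<le> b" by (rule s1le[OF bB])
    have b0': "b \<in> {0..s0}" using bB by (auto simp: B_def)
    have "dist (u b) (u \<sigma>1) < \<delta>" using ee[OF b0'] bgt bl by (simp add: dist_real_def)
    then have "u b \<in> cball (u \<sigma>1) \<delta>" by (simp add: dist_commute)
    then have "u b \<in> K2" using ballK2[OF us1] by auto
    then show False using bB by (auto simp: B_def)
  qed
  have G: "(\<forall>\<sigma>\<in>{0..s0}. u \<sigma> \<in> U \<and> (u has_vector_derivative f \<sigma> (u \<sigma>)) (at \<sigma> within {0..s0}))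
      \<and> (\<forall>\<sigma>\<in>{0..s0}. cone_le C (u \<sigma>) (w \<sigma>) \<and> u \<sigma> \<in> K)"
    by (rule good) (use allK2 s00 in auto)
  have solz: "ode_sol_on T U f z s0 u" using G u0 s0' by (simp add: ode_sol_on_def)
  have zD: "z \<in> D_f T U f t"
    using zU theta_ge[OF solz] ts0 by (auto simp: D_f_def intro: less_le_trans[of _ "ereal s0"])
  have "psi_f T U f t z = u t" by (rule psi_eq[OF solz t0]) (use ts0 in simp)
  moreover have "psi_f T U f t x = \<phi>x t" by (rule psi_eq[OF solx t0]) (use ts0 in simp)
  moreover have "psi_f T U f t y = \<phi>y t" by (rule psi_eq[OF soly t0]) (use ts0 in simp)
  moreover have "cone_le C (u t) (w t)" using G t0 ts0 by auto
  ultimately show ?thesis using zD by (simp add: z_def w_def)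
qed

end


theorem theorem1:
  fixes C :: "'a::euclidean_space set" and U :: "'a set"
    and T :: ereal and f :: "real \<Rightarrow> 'a \<Rightarrow> 'a"
  assumes "closed C" and "proper_cone C"
    and "U \<noteq> {}" and "order_regular C U" and "convex U" and "open U"
    and "0 < T"
    and "continuous_on (time_dom T \<times> U) (\<lambda>(t, x). f t x)"
    and "\<And>t. t \<in> time_dom T \<Longrightarrow> quasi_monotone_inc C U (f t)"
    and "\<And>t. t \<in> time_dom T \<Longrightarrow> convex_map C U (f t)"
  shows "\<forall>t\<in>time_dom T. convex (D_f T U f t) \<and>
           (\<forall>x\<in>D_f T U f t. \<forall>y\<in>D_f T U f t. \<forall>c::real. 0 \<le> c \<and> c \<le> 1 \<longrightarrow>
              cone_le C (psi_f T U f t (c *\<^sub>R x + (1 - c) *\<^sub>R y))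
                        (c *\<^sub>R psi_f T U f t x + (1 - c) *\<^sub>R psi_f T U f t y))"
proof -
  interpret ode_setting C U T f using assms by unfold_locales
  show ?thesis
  proof (intro ballI conjI allI impI)
    fix t assume t: "t \<in> time_dom T"
    show "convex (D_f T U f t)"
    proof (rule convexI)
      fix x y and u v :: real
      assume x: "x \<in> D_f T U f t" and y: "y \<in> D_f T U f t" and uv: "0 \<le> u" "0 \<le> v" "u + v = 1"
      have v: "v = 1 - u" using uv by simp
      show "u *\<^sub>R x + v *\<^sub>R y \<in> D_f T U f t" unfolding v using main_step[OF t x y, of u] uv by simp
    qed
    fix x y and c :: real
    assume x: "x \<in> D_f T U f t" and y: "y \<in> D_f T U f t" and c: "0 \<le> c \<and> c \<le> 1"
    show "cone_le C (psi_f T U f t (c *\<^sub>R x + (1 - c) *\<^sub>R y)) (c *\<^sub>R psi_f T U f t x + (1 - c) *\<^sub>R psi_f T U f t y)"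
      using main_step[OF t x y, of c] c by simp
  qed
qed

end
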